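(* Let $1\le p<\infty$, $N\ge2$, and for $1\le i\le N$ let $T_i=T_{f_i,\omega^{(i)}}$ be unilateral pseudo-shifts on $\ell^p(\mathbb{N})$ with maps $f_i$ and weights $\omega^{(i)}=(w^{(i)}_{f_i(m)})_m$; let $W^{(i)}_{m,n}=\prod_{\nu=1}^nw^{(i)}_{f_i^\nu(m)}$. The following are equivalent: (i) $T_1,\dots,T_N$ are d-weakly mixing. (ii) $T_1,\dots,T_N$ satisfy the Disjoint Hypercyclicity Criterion. (iii) For each $R\in\mathbb{N}$, the direct sums $\oplus_{r=1}^RT_1,\dots,\oplus_{r=1}^RT_N$ satisfy the Disjoint Blow-up/Collapse Criterion. (iv) There is a strictly increasing sequence $(n_k)$ of positive integers such that (a) $|W^{(i)}_{m,n_k}|\to\infty$ as $k\to\infty$ for all $m\in\mathbb{N}$, $1\le i\le N$; and (b) for each $\epsilon>0$ and $K,M\in\mathbb{N}$ there is $k\ge K$ such that for all $1\le i,\ell\le N$ with $i\ne\ell$: $f_\ell^{n_k}([M])\cap f_i^{n_k}([M])=\emptyset$ and $\left|\frac{W^{(i)}_{f_i^{-n_k}(j),n_k}}{W^{(\ell)}_{f_\ell^{-n_k}(j),n_k}}\right|<\epsilon$ whenever $j\in f_\ell^{n_k}([M])\cap f_i^{n_k}(\mathbb{N}\setminus[M])$.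
   Context: $\mathbb{N}=\{1,2,\dots\}$; $\{e_m\}$ is the canonical basis of $\ell^p(\mathbb{N})$ over $\mathbb{K}\in\{\mathbb{R},\mathbb{C}\}$. For a strictly increasing $f:\mathbb{N}\to\mathbb{N}$ with $f(1)>1$ and a bounded, nonzero sequence of scalars $\omega=(w_{f(m)})_{m}$, $T_{f,\omega}(\sum_m\alpha_me_m)=\sum_mw_{f(m)}\alpha_{f(m)}e_m$. $[M]=\{1,\dots,M\}$, $f^n$ is the $n$-fold composition, $f(A)=\{f(m):m\in A\}$, $f^{-n}$ the inverse of $f^n$ on $f^n(\mathbb{N})$. For operators $S_1,\dots,S_N$ on a Banach space $Y$: they are d-topologically transitive if for all non-empty open $V_0,U_1,\dots,U_N\subset Y$ there is $n$ with $V_0\cap S_1^{-n}(U_1)\cap\cdots\cap S_N^{-n}(U_N)\ne\emptyset$; they are d-weakly mixing if $S_1\oplus S_1,\dots,S_N\oplus S_N$ are d-topologically transitive. They satisfy the Disjoint Hypercyclicity Criterion if there exist a strictly increasing sequence $(n_k)$, dense subsets $Y_0,Y_1,\dots,Y_N$ of $Y$ and maps $S_{j,k}:Y_j\to Y$ ($1\le j\le N$, $k\in\mathbb{N}$) with: $S_i^{n_k}\to0$ pointwise on $Y_0$; $S_{j,k}\to0$ pointwise on $Y_j$; and $S_i^{n_k}S_{j,k}-\delta_{i,j}\mathrm{Id}\to0$ pointwise on $Y_j$, for all $1\le i,j\le N$. They satisfy the Disjoint Blow-up/Collapse Criterion if there exist a strictly increasing $(n_k)$, a dense $Y_0\subset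 Y$ and maps $S_k:\oplus_{i=1}^NY_0\to Y$ with $S_i^{n_k}y\to0$ for all $y\in Y_0$, $1\le i\le N$, and such that for each $\epsilon>0$, $K\in\mathbb{N}$, $y_1,\dots,y_N\in Y_0$ there is $k\ge K$ with $\|S_k(y_1,\dots,y_N)\|<\epsilon$ and $\|S_i^{n_k}S_k(y_1,\dots,y_N)-y_i\|<\epsilon$ for all $i$. *)

theory Defs
  imports "HOL-Analysis.Analysis"
begin

text \<open>Norms are expressed as distances to the zero point: norm y = d y z,
  and norm (a - b) = d a b.\<close>

definition sp_open :: "'v set \<Rightarrow> ('v \<Rightarrow> 'v \<Rightarrow> real) \<Rightarrow> 'v set \<Rightarrow> bool" where
  "sp_open Y d U \<longleftrightarrow> U \<subseteq> Y \<and> (\<forall>x\<in>U. \<exists>e>0. \<forall>y\<in>Y. d x y < e \<longrightarrow> y \<in> U)"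

definition sp_dense :: "'v set \<Rightarrow> ('v \<Rightarrow> 'v \<Rightarrow> real) \<Rightarrow> 'v set \<Rightarrow> bool" where
  "sp_dense Y d D \<longleftrightarrow> D \<subseteq> Y \<and> (\<forall>y\<in>Y. \<forall>e>0. \<exists>x\<in>D. d y x < e)"

text \<open>Operators S 0, ..., S (N-1) on Y (0-based indexing of the operators).\<close>

definition d_top_transitive ::
  "'v set \<Rightarrow> ('v \<Rightarrow> 'v \<Rightarrow> real) \<Rightarrow> nat \<Rightarrow> (nat \<Rightarrow> 'v \<Rightarrow> 'v) \<Rightarrow> bool" where
  "d_top_transitive Y d N S \<longleftrightarrow>
     (\<forall>V U. sp_open Y d V \<and> V \<noteq> {} \<and> (\<forall>i<N. sp_open Y d (U i) \<and> U i \<noteq> {}) \<longrightarrow>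
        (\<exists>n\<ge>1. \<exists>x\<in>V. \<forall>i<N. (S i ^^ n) x \<in> U i))"

text \<open>R-fold direct sum of (Y, d, z): tuples indexed by r < R (padded with z),
  with the sum metric (equivalent to any product norm).\<close>

definition psum_carrier :: "nat \<Rightarrow> 'v set \<Rightarrow> 'v \<Rightarrow> (nat \<Rightarrow> 'v) set" where
  "psum_carrier R Y z = {x. (\<forall>r<R. x r \<in> Y) \<and> (\<forall>r\<ge>R. x r = z)}"

definition psum_dist :: "nat \<Rightarrow> ('v \<Rightarrow> 'v \<Rightarrow> real) \<Rightarrow> (nat \<Rightarrow> 'v) \<Rightarrow> (nat \<Rightarrow> 'v) \<Rightarrow> real" where
  "psum_dist R d x y = (\<Sum>r<R. d (x r) (y r))"

definition psum_op :: "nat \<Rightarrow> 'v \<Rightarrow> ('v \<Rightarrow> 'v) \<Rightarrow> (nat \<Rightarrow> 'v) \<Rightarrow> (nat \<Rightarrow> 'v)" where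
  "psum_op R z S x = (\<lambda>r. if r < R then S (x r) else z)"

definition d_weakly_mixing ::
  "'v set \<Rightarrow> ('v \<Rightarrow> 'v \<Rightarrow> real) \<Rightarrow> 'v \<Rightarrow> nat \<Rightarrow> (nat \<Rightarrow> 'v \<Rightarrow> 'v) \<Rightarrow> bool" where
  "d_weakly_mixing Y d z N S \<longleftrightarrow>
     d_top_transitive (psum_carrier 2 Y z) (psum_dist 2 d) N (\<lambda>i. psum_op 2 z (S i))"

definition disjoint_hc_criterion ::
  "'v set \<Rightarrow> ('v \<Rightarrow> 'v \<Rightarrow> real) \<Rightarrow> 'v \<Rightarrow> nat \<Rightarrow> (nat \<Rightarrow> 'v \<Rightarrow> 'v) \<Rightarrow> bool" where
  "disjoint_hc_criterion Y d z N S \<longleftrightarrow>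
     (\<exists>(nk :: nat \<Rightarrow> nat) (Y0 :: 'v set) (Ys :: nat \<Rightarrow> 'v set) (Sjk :: nat \<Rightarrow> nat \<Rightarrow> 'v \<Rightarrow> 'v).
        strict_mono nk \<and>
        sp_dense Y d Y0 \<and> (\<forall>j<N. sp_dense Y d (Ys j)) \<and>
        (\<forall>j<N. \<forall>k. \<forall>y\<in>Ys j. Sjk j k y \<in> Y) \<and>
        (\<forall>i<N. \<forall>y\<in>Y0. (\<lambda>k. d ((S i ^^ nk k) y) z) \<longlonglongrightarrow> 0) \<and>
        (\<forall>j<N. \<forall>y\<in>Ys j. (\<lambda>k. d (Sjk j k y) z) \<longlonglongrightarrow> 0) \<and>
        (\<forall>i<N. \<forall>j<N. \<forall>y\<in>Ys j.
            (\<lambda>k. d ((S i ^^ nk k) (Sjk j k y)) (if i = j then y else z)) \<longlonglongrightarrow> 0))"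

definition disjoint_bc_criterion ::
  "'v set \<Rightarrow> ('v \<Rightarrow> 'v \<Rightarrow> real) \<Rightarrow> 'v \<Rightarrow> nat \<Rightarrow> (nat \<Rightarrow> 'v \<Rightarrow> 'v) \<Rightarrow> bool" where
  "disjoint_bc_criterion Y d z N S \<longleftrightarrow>
     (\<exists>(nk :: nat \<Rightarrow> nat) (Y0 :: 'v set) (Sk :: nat \<Rightarrow> (nat \<Rightarrow> 'v) \<Rightarrow> 'v).
        strict_mono nk \<and> sp_dense Y d Y0 \<and>
        (\<forall>k y. (\<forall>i<N. y i \<in> Y0) \<longrightarrow> Sk k y \<in> Y) \<and>
        (\<forall>i<N. \<forall>y\<in>Y0. (\<lambda>k. d ((S i ^^ nk k) y) z) \<longlonglongrightarrow> 0) \<and>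
        (\<forall>\<epsilon>>0. \<forall>K. \<forall>y. (\<forall>i<N. y i \<in> Y0) \<longrightarrow>
            (\<exists>k\<ge>K. d (Sk k y) z < \<epsilon> \<and> (\<forall>i<N. d ((S i ^^ nk k) (Sk k y)) (y i) < \<epsilon>))))"

section \<open>The space l^p and unilateral pseudo-shifts (0-based indices: N = {0,1,...})\<close>

definition lp_space :: "real \<Rightarrow> (nat \<Rightarrow> 'a::real_normed_vector) set" where
  "lp_space p = {x. summable (\<lambda>m. norm (x m) powr p)}"

definition lp_dist :: "real \<Rightarrow> (nat \<Rightarrow> 'a::real_normed_vector) \<Rightarrow> (nat \<Rightarrow> 'a) \<Rightarrow> real" where
  "lp_dist p x y = (\<Sum>m. norm (x m - y m) powr p) powr (1 / p)"

text \<open>(T_{f,w} x)_m = w_{f(m)} x_{f(m)}; only the values w (f m) of the weight matter.\<close>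

definition pshift :: "(nat \<Rightarrow> nat) \<Rightarrow> (nat \<Rightarrow> 'a::real_normed_field) \<Rightarrow> (nat \<Rightarrow> 'a) \<Rightarrow> (nat \<Rightarrow> 'a)" where
  "pshift f w x = (\<lambda>m. w (f m) * x (f m))"

definition pseudo_shift_data :: "(nat \<Rightarrow> nat) \<Rightarrow> (nat \<Rightarrow> 'a::real_normed_field) \<Rightarrow> bool" where
  "pseudo_shift_data f w \<longleftrightarrow> strict_mono f \<and> f 0 > 0 \<and>
     (\<exists>B. \<forall>m. norm (w (f m)) \<le> B) \<and> (\<forall>m. w (f m) \<noteq> 0)"

definition Wprod :: "(nat \<Rightarrow> nat) \<Rightarrow> (nat \<Rightarrow> 'a::real_normed_field) \<Rightarrow> nat \<Rightarrow> nat \<Rightarrow> 'a" where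
  "Wprod f w m n = (\<Prod>\<nu>\<in>{1..n}. w ((f ^^ \<nu>) m))"

end

theory Submission
  imports Defs "HOL-Library.Function_Algebras"
begin

lemma lp_dist_0: "lp_dist p x y = lp_dist p (x - y) (\<lambda>_. 0 :: 'a::real_normed_vector)"
  unfolding lp_dist_def by simp

lemma lp_dist_sym: "lp_dist p x y = lp_dist p y (x :: nat \<Rightarrow> 'a::real_normed_vector)"
  unfolding lp_dist_def by (simp add: norm_minus_commute)

lemma lp_dist_self[simp]: "lp_dist p x (x :: nat \<Rightarrow> 'a::real_normed_vector) = 0"
  unfolding lp_dist_def by simp

lemma lp_dist_nonneg: "0 \<le> lp_dist p x y"
  unfolding lp_dist_def by simp


context fixes p :: real assumes p1: "1 \<le> p" begin

lemma pow_add_le: "norm (a + b::'a::real_normed_vector) powr p \<le> 2 powr p * (norm a powr p + norm b powr p)"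
proof -
  have "norm (a+b) \<le> 2 * max (norm a) (norm b)" using norm_triangle_ineq[of a b] by linarith
  hence "norm (a+b) powr p \<le> (2 * max (norm a) (norm b)) powr p"
    using p1 by (intro powr_mono2) auto
  also have "\<dots> = 2 powr p * max (norm a) (norm b) powr p" by (simp add: powr_mult)
  also have "max (norm a) (norm b) powr p \<le> norm a powr p + norm b powr p"
    by (cases "norm a \<le> norm b") (auto simp: max_def)
  finally show ?thesis by (simp add: mult_left_mono)
qed

lemma lp_add: "x \<in> lp_space p \<Longrightarrow> y \<in> lp_space p \<Longrightarrow> (x + y :: nat \<Rightarrow> 'a::real_normed_vector) \<in> lp_space p"
  unfolding lp_space_def mem_Collect_eq
  apply (rule summable_comparison_test[where g="\<lambda>m. 2 powr p * (norm (x m) powr p + norm (y m) powr p)"])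
  using pow_add_le by (auto intro!: summable_mult summable_add)

lemma lp_uminus: "x \<in> lp_space p \<Longrightarrow> (- x :: nat \<Rightarrow> 'a::real_normed_vector) \<in> lp_space p"
  unfolding lp_space_def by simp

lemma lp_diff: "x \<in> lp_space p \<Longrightarrow> y \<in> lp_space p \<Longrightarrow> (x - y :: nat \<Rightarrow> 'a::real_normed_vector) \<in> lp_space p"
  using lp_add[of x "-y"] lp_uminus[of y] by simp

lemma lp_finite: "finite A \<Longrightarrow> (\<And>t. t \<notin> A \<Longrightarrow> x t = 0) \<Longrightarrow> (x :: nat \<Rightarrow> 'a::real_normed_vector) \<in> lp_space p
   \<and> (\<Sum>m. norm (x m) powr p) = (\<Sum>m\<in>A. norm (x m) powr p)"
  unfolding lp_space_def
  by (auto intro!: summable_finite suminf_finite)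

lemma lp_zero: "(\<lambda>_. 0 :: 'a::real_normed_vector) \<in> lp_space p"
  using lp_finite[of "{}" "\<lambda>_. 0"] by simp

lemma lp_dist_pt: assumes "x \<in> lp_space p" "y \<in> lp_space p"
  shows "norm (x t - y t :: 'a::real_normed_vector) \<le> lp_dist p x y"
proof -
  have s: "summable (\<lambda>m. norm (x m - y m) powr p)" using lp_diff[OF assms] by (simp add: lp_space_def)
  have "norm (x t - y t) powr p \<le> (\<Sum>m. norm (x m - y m) powr p)"
    using sum_le_suminf[OF s, of "{t}"] by simp
  hence "(norm (x t - y t) powr p) powr (1/p) \<le> (\<Sum>m. norm (x m - y m) powr p) powr (1/p)"
    using p1 by (intro powr_mono2) auto
  thus ?thesis using p1 by (simp add: powr_powr lp_dist_def)
qed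

lemma lp_quasi: assumes "x \<in> lp_space p" "y \<in> lp_space p" "z \<in> lp_space p"
  shows "lp_dist p x z \<le> 4 * (lp_dist p x y + lp_dist p y (z :: nat \<Rightarrow> 'a::real_normed_vector))"
proof -
  define A where "A = (\<Sum>m. norm (x m - y m) powr p)"
  define B where "B = (\<Sum>m. norm (y m - z m) powr p)"
  have sA: "summable (\<lambda>m. norm (x m - y m) powr p)" using lp_diff[OF assms(1,2)] by (simp add: lp_space_def)
  have sB: "summable (\<lambda>m. norm (y m - z m) powr p)" using lp_diff[OF assms(2,3)] by (simp add: lp_space_def)
  have sC: "summable (\<lambda>m. norm (x m - z m) powr p)" using lp_diff[OF assms(1,3)] by (simp add: lp_space_def)
  have A0: "0 \<le> A" unfolding A_def by (rule suminf_nonneg[OF sA]) simp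
  have B0: "0 \<le> B" unfolding B_def by (rule suminf_nonneg[OF sB]) simp
  have "(\<Sum>m. norm (x m - z m) powr p) \<le> (\<Sum>m. 2 powr p * (norm (x m - y m) powr p + norm (y m - z m) powr p))"
  proof (rule suminf_le)
    fix m show "norm (x m - z m) powr p \<le> 2 powr p * (norm (x m - y m) powr p + norm (y m - z m) powr p)"
      using pow_add_le[of "x m - y m" "y m - z m"] by simp
  qed (use sA sB sC in \<open>auto intro!: summable_mult summable_add\<close>)
  also have "\<dots> = 2 powr p * (A + B)" unfolding A_def B_def
    using sA sB by (simp add: suminf_mult summable_add suminf_add[symmetric])
  finally have C: "(\<Sum>m. norm (x m - z m) powr p) \<le> 2 powr p * (A + B)" .
  have "lp_dist p x z \<le> (2 powr p * (A + B)) powr (1/p)"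
    unfolding lp_dist_def using p1 C suminf_nonneg[OF sC] by (intro powr_mono2) auto
  also have "\<dots> = 2 * (A + B) powr (1/p)" using p1 A0 B0 by (simp add: powr_mult powr_powr)
  also have "(A + B) powr (1/p) \<le> 2 * (A powr (1/p) + B powr (1/p))"
  proof -
    have "(A + B) powr (1/p) \<le> (2 * max A B) powr (1/p)" using p1 A0 B0 by (intro powr_mono2) auto
    also have "\<dots> = 2 powr (1/p) * max A B powr (1/p)" using A0 B0 by (simp add: powr_mult)
    also have "\<dots> \<le> 2 * max A B powr (1/p)"
    proof (rule mult_right_mono)
      show "2 powr (1/p) \<le> (2::real)" using p1 powr_mono[of "1/p" 1 2] by auto
    qed simp
    also have "max A B powr (1/p) \<le> A powr (1/p) + B powr (1/p)" by (cases "A \<le> B") (auto simp: max_def)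
    finally show ?thesis by simp
  qed
  finally have "lp_dist p x z \<le> 2 * (2 * (A powr (1/p) + B powr (1/p)))"
    by simp
  thus ?thesis by (simp add: A_def B_def lp_dist_def)
qed

end

lemma fpow_strict_mono: "strict_mono (f::nat\<Rightarrow>nat) \<Longrightarrow> strict_mono (f ^^ n)"
  by (induction n) (auto simp: strict_mono_def funpow_0)

lemma fpow_ge: "(\<And>m. m < f m) \<Longrightarrow> m + n \<le> (f ^^ n) (m::nat)"
proof (induction n)
  case (Suc n)
  have "(f^^n) m < f ((f^^n) m)" by (rule Suc.prems)
  with Suc.IH[OF Suc.prems] show ?case by simp
qed simp

lemma psd_gt: "pseudo_shift_data f w \<Longrightarrow> m < f m"
proof (induction m)
  case 0 thus ?case by (simp add: pseudo_shift_data_def)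
next
  case (Suc m)
  hence "f m < f (Suc m)" by (simp add: pseudo_shift_data_def strict_mono_def)
  thus ?case using Suc by simp
qed

lemma Wprod_0[simp]: "Wprod f w m 0 = 1" by (simp add: Wprod_def)

lemma Wprod_Suc: "Wprod f w m (Suc n) = w (f m) * Wprod f w (f m) n"
proof -
  have "Wprod f w m (Suc n) = w ((f^^1) m) * (\<Prod>\<nu>\<in>{Suc 1..Suc n}. w ((f ^^ \<nu>) m))"
    unfolding Wprod_def by (subst prod.atLeast_Suc_atMost) auto
  also have "(\<Prod>\<nu>\<in>{Suc 1..Suc n}. w ((f ^^ \<nu>) m)) = (\<Prod>\<nu>\<in>{1..n}. w ((f ^^ Suc \<nu>) m))"
    by (rule prod.shift_bounds_cl_Suc_ivl)
  also have "\<dots> = Wprod f w (f m) n" unfolding Wprod_def by (simp add: funpow_swap1)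
  finally show ?thesis by simp
qed

lemma pshift_pow: "(pshift f w ^^ n) x = (\<lambda>m. Wprod f w m n * x ((f^^n) m))"
proof (induction n)
  case (Suc n)
  have "(pshift f w ^^ Suc n) x = pshift f w ((pshift f w ^^ n) x)" by simp
  also have "\<dots> = (\<lambda>m. Wprod f w m (Suc n) * x ((f^^Suc n) m))"
    by (rule ext) (simp add: Suc pshift_def Wprod_Suc funpow_swap1 funpow_Suc_right del: funpow.simps)
  finally show ?case .
qed simp

lemma Wprod_nz: "pseudo_shift_data f w \<Longrightarrow> Wprod f w m n \<noteq> 0"
  by (induction n arbitrary: m) (auto simp: Wprod_Suc pseudo_shift_data_def)

lemma Wprod_bound: "(\<And>m. norm (w (f m)) \<le> B) \<Longrightarrow> norm (Wprod f w m n) \<le> B ^ n"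
proof (induction n arbitrary: m)
  case 0 thus ?case by simp
next
  case (Suc n)
  have B0: "0 \<le> B" using Suc.prems[of m] norm_ge_zero[of "w (f m)"] by linarith
  have "norm (Wprod f w m (Suc n)) = norm (w (f m)) * norm (Wprod f w (f m) n)"
    by (simp add: Wprod_Suc norm_mult)
  also have "\<dots> \<le> B * B ^ n" using Suc B0
    by (intro mult_mono) auto
  finally show ?case by simp
qed

context fixes p :: real assumes p1: "1 \<le> p" begin

lemma lp_pshift: assumes ps: "pseudo_shift_data f w" and x: "(x :: nat \<Rightarrow> 'a::real_normed_field) \<in> lp_space p"
  shows "pshift f w x \<in> lp_space p"
proof -
  obtain B where B: "\<And>m. norm (w (f m)) \<le> B" using ps by (auto simp: pseudo_shift_data_def)
  have sm: "strict_mono f" using ps by (simp add: pseudo_shift_data_def)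
  define h where "h n = (if n \<in> range f then norm (x n) powr p else 0)" for n
  have "summable h" unfolding h_def
    by (rule summable_comparison_test[OF _ x[unfolded lp_space_def mem_Collect_eq]]) auto
  hence "summable (\<lambda>m. h (f m))" using summable_mono_reindex[OF sm, of h] by (auto simp: h_def)
  hence s: "summable (\<lambda>m. norm (x (f m)) powr p)" by (simp add: h_def)
  have "summable (\<lambda>m. B powr p * norm (x (f m)) powr p)" using summable_mult[OF s] .
  thus ?thesis unfolding lp_space_def mem_Collect_eq pshift_def
  proof (rule summable_comparison_test[rotated], intro exI allI impI)
    fix m
    have "norm (w (f m) * x (f m)) powr p = norm (w (f m)) powr p * norm (x (f m)) powr p"
      by (simp add: norm_mult powr_mult)
    also have "\<dots> \<le> B powr p * norm (x (f m)) powr p"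
      using B[of m] p1 by (intro mult_right_mono powr_mono2) auto
    finally show "norm (norm (w (f m) * x (f m)) powr p) \<le> B powr p * norm (x (f m)) powr p" by simp
  qed
qed

lemma lp_pshift_pow: "pseudo_shift_data f w \<Longrightarrow> (x :: nat \<Rightarrow> 'a::real_normed_field) \<in> lp_space p
   \<Longrightarrow> (pshift f w ^^ n) x \<in> lp_space p"
  by (induction n) (auto intro: lp_pshift)

end

definition c00 :: "(nat \<Rightarrow> 'a::zero) set" where "c00 = {x. \<exists>M. \<forall>m\<ge>M. x m = 0}"

definition ib :: "'v set \<Rightarrow> ('v \<Rightarrow> 'v \<Rightarrow> real) \<Rightarrow> 'v \<Rightarrow> real \<Rightarrow> 'v set" where
  "ib Y d c \<delta> = {y\<in>Y. \<exists>e>0. \<forall>y'\<in>Y. d y y' < e \<longrightarrow> d c y' < \<delta>}"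

lemma ib_open: assumes K: "K > 0" and q: "\<And>a b c. a \<in> Y \<Longrightarrow> b \<in> Y \<Longrightarrow> c \<in> Y \<Longrightarrow> d a c \<le> K * (d a b + d b c)"
  shows "sp_open Y d (ib Y d c \<delta>)"
  unfolding sp_open_def
proof (intro conjI ballI)
  show "ib Y d c \<delta> \<subseteq> Y" by (auto simp: ib_def)
  fix y assume "y \<in> ib Y d c \<delta>"
  then obtain e where y: "y \<in> Y" "e > 0" and e: "\<And>y'. y' \<in> Y \<Longrightarrow> d y y' < e \<Longrightarrow> d c y' < \<delta>"
    by (auto simp: ib_def)
  show "\<exists>e>0. \<forall>y''\<in>Y. d y y'' < e \<longrightarrow> y'' \<in> ib Y d c \<delta>"
  proof (intro exI[of _ "e/(2*K)"] conjI ballI impI)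
    show "e/(2*K) > 0" using y K by simp
    fix y'' assume y'': "y'' \<in> Y" "d y y'' < e/(2*K)"
    show "y'' \<in> ib Y d c \<delta>" unfolding ib_def
    proof (intro CollectI conjI exI[of _ "e/(2*K)"] ballI impI)
      fix y' assume y': "y' \<in> Y" "d y'' y' < e/(2*K)"
      have "d y y' \<le> K * (d y y'' + d y'' y')" using q y y'' y' by blast
      also have "\<dots> < K * (e/(2*K) + e/(2*K))" using K y'' y' by (intro mult_strict_left_mono) auto
      also have "\<dots> = e" using K by (simp add: field_simps)
      finally show "d c y' < \<delta>" using e y' by blast
    qed (use y'' y K in auto)
  qed
qed

lemma ib_center: "c \<in> Y \<Longrightarrow> \<delta> > 0 \<Longrightarrow> c \<in> ib Y d c \<delta>"
  unfolding ib_def by auto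

lemma ib_mem: "y \<in> ib Y d c \<delta> \<Longrightarrow> d y y = 0 \<Longrightarrow> d c y < \<delta>"
  unfolding ib_def by auto

lemma psum_pow: "x \<in> psum_carrier R Y z \<Longrightarrow> (psum_op R z S ^^ n) x = (\<lambda>r. if r < R then (S ^^ n) (x r) else z)"
proof (induction n)
  case 0 thus ?case by (auto simp: psum_carrier_def)
next
  case (Suc n) thus ?case by (auto simp: psum_op_def)
qed

lemma psum_carrier_op: "x \<in> psum_carrier R Y z \<Longrightarrow> (\<And>y. y \<in> Y \<Longrightarrow> S y \<in> Y) \<Longrightarrow> psum_op R z S x \<in> psum_carrier R Y z"
  by (auto simp: psum_carrier_def psum_op_def)

context fixes p :: real assumes p1: "1 \<le> p" begin

lemma c00_lp: "(x :: nat \<Rightarrow> 'a::real_normed_vector) \<in> c00 \<Longrightarrow> x \<in> lp_space p"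
proof -
  assume "x \<in> c00"
  then obtain M where "\<forall>m\<ge>M. x m = 0" by (auto simp: c00_def)
  thus ?thesis using lp_finite[OF p1, of "{..<M}" x] by (auto simp: not_less)
qed

lemma c00_dense: "sp_dense (lp_space p) (lp_dist p) (c00 :: (nat \<Rightarrow> 'a::real_normed_vector) set)"
  unfolding sp_dense_def
proof (intro conjI ballI allI impI)
  show "c00 \<subseteq> lp_space p" using c00_lp by blast
  fix x :: "nat \<Rightarrow> 'a" and e :: real assume x: "x \<in> lp_space p" and e: "e > 0"
  have s: "summable (\<lambda>m. norm (x m) powr p)" using x by (simp add: lp_space_def)
  obtain M where M: "\<forall>n\<ge>M. norm (\<Sum>i. norm (x (i + n)) powr p) < e powr p"
    using suminf_exist_split[OF _ s, of "e powr p"] e by auto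
  define x' where "x' m = (if m < M then x m else 0)" for m
  have x'c: "x' \<in> c00" unfolding c00_def x'_def by (auto intro!: exI[of _ M])
  define g where "g m = norm (x m - x' m) powr p" for m
  have sg: "summable g" unfolding g_def x'_def
    by (rule summable_comparison_test[OF _ s]) auto
  have "suminf g = (\<Sum>n. g (n + M)) + (\<Sum>i<M. g i)" by (rule suminf_split_initial_segment[OF sg])
  also have "(\<Sum>i<M. g i) = 0" by (simp add: g_def x'_def)
  also have "(\<Sum>n. g (n + M)) = (\<Sum>i. norm (x (i + M)) powr p)" by (simp add: g_def x'_def)
  finally have "suminf g < e powr p" using M by auto
  moreover have "0 \<le> suminf g" using sg by (rule suminf_nonneg) (simp add: g_def)
  ultimately have "suminf g powr (1/p) < (e powr p) powr (1/p)"
    using p1 by (intro powr_less_mono2) auto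
  moreover have "lp_dist p x x' = suminf g powr (1/p)" unfolding lp_dist_def g_def by (rule refl)
  ultimately have "lp_dist p x x' < e" using p1 e by (simp add: powr_powr)
  thus "\<exists>x'\<in>c00. lp_dist p x x' < e" using x'c by blast
qed

lemma lp_tendsto_add:
  assumes a: "\<And>k. (a k :: nat \<Rightarrow> 'a::real_normed_vector) \<in> lp_space p" and b: "\<And>k. b k \<in> lp_space p"
    and la: "(\<lambda>k. lp_dist p (a k) (\<lambda>_. 0)) \<longlonglongrightarrow> 0" and lb: "(\<lambda>k. lp_dist p (b k) (\<lambda>_. 0)) \<longlonglongrightarrow> 0"
  shows "(\<lambda>k. lp_dist p (a k + b k) (\<lambda>_. 0)) \<longlonglongrightarrow> 0"
proof (rule tendsto_sandwich[of "\<lambda>_. 0" _ _ "\<lambda>k. 4 * (lp_dist p (a k) (\<lambda>_. 0) + lp_dist p (b k) (\<lambda>_. 0))"])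
  show "\<forall>\<^sub>F n in sequentially. 0 \<le> lp_dist p (a n + b n) (\<lambda>_. 0)" by (simp add: lp_dist_nonneg)
  show "\<forall>\<^sub>F n in sequentially. lp_dist p (a n + b n) (\<lambda>_. 0) \<le> 4 * (lp_dist p (a n) (\<lambda>_. 0) + lp_dist p (b n) (\<lambda>_. 0))"
  proof (intro always_eventually allI)
    fix k
    have "lp_dist p (a k + b k) (\<lambda>_. 0) \<le> 4 * (lp_dist p (a k + b k) (b k) + lp_dist p (b k) (\<lambda>_. 0))"
      using lp_quasi[OF p1 lp_add[OF p1 a b] b lp_zero[OF p1]] by simp
    also have "lp_dist p (a k + b k) (b k) = lp_dist p (a k) (\<lambda>_. 0)"
      using lp_dist_0[of p "a k + b k" "b k"] by simp
    finally show "lp_dist p (a k + b k) (\<lambda>_. 0) \<le> 4 * (lp_dist p (a k) (\<lambda>_. 0) + lp_dist p (b k) (\<lambda>_. 0))" .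
  qed
  show "(\<lambda>k. 4 * (lp_dist p (a k) (\<lambda>_. 0) + lp_dist p (b k) (\<lambda>_. 0))) \<longlonglongrightarrow> 0"
    using tendsto_mult[OF tendsto_const tendsto_add[OF la lb], of 4] by simp
qed simp

lemma lp_sum: "finite A \<Longrightarrow> (\<And>j. j \<in> A \<Longrightarrow> (a j :: nat \<Rightarrow> 'a::real_normed_vector) \<in> lp_space p) \<Longrightarrow> (\<Sum>j\<in>A. a j) \<in> lp_space p"
  by (induction A rule: finite_induct) (auto intro: lp_add[OF p1] lp_zero[OF p1] simp: zero_fun_def)

lemma lp_tendsto_sum:
  assumes "finite A" and a: "\<And>j k. j \<in> A \<Longrightarrow> (a j k :: nat \<Rightarrow> 'a::real_normed_vector) \<in> lp_space p"
    and la: "\<And>j. j \<in> A \<Longrightarrow> (\<lambda>k. lp_dist p (a j k) (\<lambda>_. 0)) \<longlonglongrightarrow> 0"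
  shows "(\<lambda>k. lp_dist p (\<Sum>j\<in>A. a j k) (\<lambda>_. 0)) \<longlonglongrightarrow> 0"
  using assms
proof (induction A rule: finite_induct)
  case empty thus ?case by (simp add: zero_fun_def)
next
  case (insert j A)
  have "(\<lambda>k. lp_dist p (a j k + (\<Sum>j\<in>A. a j k)) (\<lambda>_. 0)) \<longlonglongrightarrow> 0"
  proof (rule lp_tendsto_add)
    show "\<And>k. a j k \<in> lp_space p" using insert by auto
    show "\<And>k. (\<Sum>j\<in>A. a j k) \<in> lp_space p" using insert by (intro lp_sum) auto
    show "(\<lambda>k. lp_dist p (a j k) (\<lambda>_. 0)) \<longlonglongrightarrow> 0" using insert by auto
    show "(\<lambda>k. lp_dist p (\<Sum>j\<in>A. a j k) (\<lambda>_. 0)) \<longlonglongrightarrow> 0" using insert by auto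
  qed
  thus ?case by (subst sum.insert[OF insert(1,2)])
qed

lemma psum_dist_self[simp]: "psum_dist R (lp_dist p) x x = 0"
  by (simp add: psum_dist_def)

lemma psum_dist_nonneg: "0 \<le> psum_dist R (lp_dist p) x y"
  by (simp add: psum_dist_def sum_nonneg lp_dist_nonneg)

lemma psum_comp: "r < R \<Longrightarrow> lp_dist p (x r) (y r) \<le> psum_dist R (lp_dist p) x y"
  unfolding psum_dist_def by (rule member_le_sum) (auto simp: lp_dist_nonneg)

lemma psum_quasi: "x \<in> psum_carrier R (lp_space p) z \<Longrightarrow> y \<in> psum_carrier R (lp_space p) z \<Longrightarrow> w \<in> psum_carrier R (lp_space p) z
  \<Longrightarrow> psum_dist R (lp_dist p) x w \<le> 4 * (psum_dist R (lp_dist p) x y + psum_dist R (lp_dist p) y (w :: nat \<Rightarrow> nat \<Rightarrow> 'a::real_normed_vector))"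
proof -
  assume a: "x \<in> psum_carrier R (lp_space p) z" "y \<in> psum_carrier R (lp_space p) z" "w \<in> psum_carrier R (lp_space p) z"
  have "(\<Sum>r<R. lp_dist p (x r) (w r)) \<le> (\<Sum>r<R. 4 * (lp_dist p (x r) (y r) + lp_dist p (y r) (w r)))"
    using a by (intro sum_mono lp_quasi[OF p1]) (auto simp: psum_carrier_def)
  thus ?thesis by (simp add: psum_dist_def sum_distrib_left sum.distrib)
qed

lemma psum_open: "sp_open (psum_carrier R (lp_space p) z) (psum_dist R (lp_dist p)) (ib (psum_carrier R (lp_space p) z) (psum_dist R (lp_dist p)) c \<delta>)"
  by (rule ib_open[of 4]) (simp, rule psum_quasi)

lemma psum_approx:
  assumes x: "x \<in> psum_carrier R (lp_space p) (\<lambda>_. 0)" and D: "sp_dense (lp_space p) (lp_dist p) D" and e: "e > 0"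
  shows "\<exists>x'\<in>psum_carrier R D (\<lambda>_. 0). psum_dist R (lp_dist p) x (x' :: nat \<Rightarrow> nat \<Rightarrow> 'a::real_normed_vector) < e"
proof (cases "R = 0")
  case True thus ?thesis by (auto simp: psum_dist_def psum_carrier_def e intro!: exI[of _ "\<lambda>_. \<lambda>_. 0"])
next
  case False
  have "\<forall>r. \<exists>y. r < R \<longrightarrow> y \<in> D \<and> lp_dist p (x r) y < e / R"
  proof (intro allI)
    fix r show "\<exists>y. r < R \<longrightarrow> y \<in> D \<and> lp_dist p (x r) y < e / R"
    proof (cases "r < R")
      case True
      hence "x r \<in> lp_space p" using x by (auto simp: psum_carrier_def)
      moreover have "e / R > 0" using e False by simp
      ultimately show ?thesis using D True unfolding sp_dense_def by blast
    qed auto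
  qed
  then obtain g where g: "\<And>r. r < R \<Longrightarrow> g r \<in> D \<and> lp_dist p (x r) (g r) < e / R" by metis
  define x' where "x' r = (if r < R then g r else (\<lambda>_. 0))" for r
  have "x' \<in> psum_carrier R D (\<lambda>_. 0)" using g by (auto simp: psum_carrier_def x'_def)
  moreover have "psum_dist R (lp_dist p) x x' < (\<Sum>r<R. e / R)"
    unfolding psum_dist_def using False g by (intro sum_strict_mono) (auto simp: x'_def)
  ultimately show ?thesis using False by auto
qed

end

definition good :: "nat \<Rightarrow> (nat \<Rightarrow> nat \<Rightarrow> nat) \<Rightarrow> (nat \<Rightarrow> nat \<Rightarrow> 'a::real_normed_field) \<Rightarrow> nat \<Rightarrow> nat \<Rightarrow> bool" where
  "good N fs ws n r \<longleftrightarrow> (\<forall>m<r. \<forall>i<N. real r < norm (Wprod (fs i) (ws i) m n)) \<and>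
     (\<forall>i<N. \<forall>l<N. i \<noteq> l \<longrightarrow> (fs l ^^ n) ` {..<r} \<inter> (fs i ^^ n) ` {..<r} = {} \<and>
        (\<forall>m1<r. \<forall>m'. r \<le> m' \<longrightarrow> (fs l ^^ n) m1 = (fs i ^^ n) m' \<longrightarrow>
            norm (Wprod (fs i) (ws i) m' n / Wprod (fs l) (ws l) m1 n) * r < 1))"

lemma good_big: "good N fs ws n r \<Longrightarrow> m < r \<Longrightarrow> i < N \<Longrightarrow> real r < norm (Wprod (fs i) (ws i) m n)"
  unfolding good_def by blast

lemma good_disj: "good N fs ws n r \<Longrightarrow> i < N \<Longrightarrow> l < N \<Longrightarrow> i \<noteq> l \<Longrightarrow> (fs l ^^ n) ` {..<r} \<inter> (fs i ^^ n) ` {..<r} = {}"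
  unfolding good_def by blast

lemma good_ratio: "good N fs ws n r \<Longrightarrow> i < N \<Longrightarrow> l < N \<Longrightarrow> i \<noteq> l \<Longrightarrow> m1 < r \<Longrightarrow> r \<le> m' \<Longrightarrow>
   (fs l ^^ n) m1 = (fs i ^^ n) m' \<Longrightarrow> norm (Wprod (fs i) (ws i) m' n / Wprod (fs l) (ws l) m1 n) * r < 1"
  unfolding good_def by blast

primrec seqc :: "(nat \<Rightarrow> nat \<Rightarrow> nat) \<Rightarrow> nat \<Rightarrow> nat" where
  "seqc h 0 = h 1 1"
| "seqc h (Suc k) = h (Suc (Suc k)) (Suc (seqc h k))"

lemma seqc_props:
  assumes h: "\<And>r n0. n0 \<le> h r n0 \<and> P (h r n0) r"
  shows "strict_mono (seqc h)" "\<And>k. 0 < seqc h k" "\<And>k. P (seqc h k) (Suc k)"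
proof -
  show "strict_mono (seqc h)"
  proof (rule strict_monoI_Suc)
    fix n have "Suc (seqc h n) \<le> h (Suc (Suc n)) (Suc (seqc h n))" using h by blast
    thus "seqc h n < seqc h (Suc n)" by simp
  qed
  show "0 < seqc h k" for k
  proof (cases k)
    case 0 have "1 \<le> h 1 1" using h by blast
    thus ?thesis using 0 by simp
  next
    case (Suc n) have "Suc (seqc h n) \<le> h (Suc (Suc n)) (Suc (seqc h n))" using h by blast
    thus ?thesis using Suc by simp
  qed
  show "\<And>k. P (seqc h k) (Suc k)" by (case_tac k) (use h in auto)
qed

locale psd =
  fixes N :: nat and fs :: "nat \<Rightarrow> nat \<Rightarrow> nat" and ws :: "nat \<Rightarrow> nat \<Rightarrow> 'a::real_normed_field"
  assumes ps: "\<And>i. i < N \<Longrightarrow> pseudo_shift_data (fs i) (ws i)"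
begin

lemma inj_fpow: "i < N \<Longrightarrow> inj (fs i ^^ n)"
  using ps fpow_strict_mono strict_mono_imp_inj_on unfolding pseudo_shift_data_def by blast

definition cond_iv where
 "cond_iv \<longleftrightarrow> (\<exists>nk :: nat \<Rightarrow> nat. strict_mono nk \<and> (\<forall>k. 0 < nk k) \<and>
              (\<forall>m. \<forall>i<N. filterlim (\<lambda>k. norm (Wprod (fs i) (ws i) m (nk k))) at_top sequentially) \<and>
              (\<forall>\<epsilon>>0. \<forall>K M. \<exists>k\<ge>K. \<forall>i<N. \<forall>l<N. i \<noteq> l \<longrightarrow>
                  ((fs l ^^ nk k) ` {..<M} \<inter> (fs i ^^ nk k) ` {..<M} = {} \<and>
                   (\<forall>j \<in> (fs l ^^ nk k) ` {..<M} \<inter> (fs i ^^ nk k) ` (UNIV - {..<M}).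
                      norm (Wprod (fs i) (ws i) (inv (fs i ^^ nk k) j) (nk k)
                            / Wprod (fs l) (ws l) (inv (fs l ^^ nk k) j) (nk k)) < \<epsilon>))))"

lemma G_iv: assumes G: "\<forall>r n0. \<exists>n\<ge>n0. good N fs ws n r" shows cond_iv
proof -
  define h where "h r n0 = (SOME n. n0 \<le> n \<and> good N fs ws n r)" for r n0
  have h: "n0 \<le> h r n0 \<and> good N fs ws (h r n0) r" for r n0
  proof -
    obtain n where "n0 \<le> n \<and> good N fs ws n r" using G by blast
    thus ?thesis unfolding h_def by (rule someI)
  qed
  define nk where "nk = seqc h"
  note sp = seqc_props[of h "good N fs ws", OF h, folded nk_def]
  show ?thesis unfolding cond_iv_def
  proof (intro exI[of _ nk] conjI allI impI sp(1,2))
    fix m i assume i: "i < N"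
    show "filterlim (\<lambda>k. norm (Wprod (fs i) (ws i) m (nk k))) at_top sequentially"
    proof (rule filterlim_at_top_mono[OF filterlim_real_sequentially])
      show "\<forall>\<^sub>F k in sequentially. real k \<le> norm (Wprod (fs i) (ws i) m (nk k))"
        unfolding eventually_sequentially
      proof (intro exI[of _ m] allI impI)
        fix k assume "m \<le> k"
        thus "real k \<le> norm (Wprod (fs i) (ws i) m (nk k))"
        proof -
          have "m < Suc k" using \<open>m \<le> k\<close> by simp
          hence "real (Suc k) < norm (Wprod (fs i) (ws i) m (nk k))"
            using sp(3)[of k] i unfolding good_def by blast
          thus ?thesis by simp
        qed
      qed
    qed
  next
    fix \<epsilon> :: real and K M assume e: "\<epsilon> > 0"
    obtain k0 :: nat where k0: "1 / \<epsilon> < k0" using reals_Archimedean2 by blast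
    define k where "k = max K (max M k0)"
    define r where "r = Suc k"
    have gd: "good N fs ws (nk k) r" using sp(3) r_def by simp
    have rM: "M \<le> r" "k0 < r" unfolding r_def k_def by auto
    have "1 / \<epsilon> < r" using k0 rM(2) by (meson of_nat_less_iff order.strict_trans)
    hence re: "1 < r * \<epsilon>" using e by (simp add: field_simps)
    show "\<exists>k\<ge>K. \<forall>i<N. \<forall>l<N. i \<noteq> l \<longrightarrow>
                  ((fs l ^^ nk k) ` {..<M} \<inter> (fs i ^^ nk k) ` {..<M} = {} \<and>
                   (\<forall>j \<in> (fs l ^^ nk k) ` {..<M} \<inter> (fs i ^^ nk k) ` (UNIV - {..<M}).
                      norm (Wprod (fs i) (ws i) (inv (fs i ^^ nk k) j) (nk k)
                            / Wprod (fs l) (ws l) (inv (fs l ^^ nk k) j) (nk k)) < \<epsilon>))"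
    proof (intro exI[of _ k] conjI allI impI ballI)
      show "K \<le> k" by (simp add: k_def)
      fix i l assume il: "i < N" "l < N" "i \<noteq> l"
      have disj: "(fs l ^^ nk k) ` {..<r} \<inter> (fs i ^^ nk k) ` {..<r} = {}" using gd il unfolding good_def by blast
      moreover have "(fs l ^^ nk k) ` {..<M} \<subseteq> (fs l ^^ nk k) ` {..<r}" "(fs i ^^ nk k) ` {..<M} \<subseteq> (fs i ^^ nk k) ` {..<r}"
        using rM by (intro image_mono; auto)+
      ultimately show "(fs l ^^ nk k) ` {..<M} \<inter> (fs i ^^ nk k) ` {..<M} = {}" by blast
      fix j assume j: "j \<in> (fs l ^^ nk k) ` {..<M} \<inter> (fs i ^^ nk k) ` (UNIV - {..<M})"
      obtain m1 where m1: "m1 < M" "j = (fs l ^^ nk k) m1" using j by blast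
      obtain m' where m': "m' \<in> UNIV - {..<M}" "j = (fs i ^^ nk k) m'" using j by blast
      have m: "m1 < M" "M \<le> m'" "j = (fs l ^^ nk k) m1" "j = (fs i ^^ nk k) m'" using m1 m' by auto
      have "r \<le> m'"
      proof (rule ccontr)
        assume "\<not> r \<le> m'"
        hence "m' \<in> {..<r}" "m1 \<in> {..<r}" using m rM by auto
        hence "j \<in> (fs l ^^ nk k) ` {..<r} \<inter> (fs i ^^ nk k) ` {..<r}" using m by blast
        thus False using disj by blast
      qed
      hence rat: "norm (Wprod (fs i) (ws i) m' (nk k) / Wprod (fs l) (ws l) m1 (nk k)) * r < 1"
        using gd il m rM unfolding good_def by auto
      have "inv (fs i ^^ nk k) j = m'" using inv_f_f[OF inj_fpow[OF il(1)]] m(4) by metis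
      moreover have "inv (fs l ^^ nk k) j = m1" using inv_f_f[OF inj_fpow[OF il(2)]] m(3) by metis
      moreover have "norm (Wprod (fs i) (ws i) m' (nk k) / Wprod (fs l) (ws l) m1 (nk k)) < \<epsilon>"
      proof -
        let ?q = "norm (Wprod (fs i) (ws i) m' (nk k) / Wprod (fs l) (ws l) m1 (nk k))"
        have "?q * r * \<epsilon> < \<epsilon>" using rat e by simp
        moreover have "?q \<le> ?q * (r * \<epsilon>)" using re by (simp add: mult_le_cancel_left1) 
        ultimately show ?thesis by (simp add: mult.assoc)
      qed
      ultimately show "norm (Wprod (fs i) (ws i) (inv (fs i ^^ nk k) j) (nk k)
                            / Wprod (fs l) (ws l) (inv (fs l ^^ nk k) j) (nk k)) < \<epsilon>" by simp
    qed
  qed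
qed


lemma iv_G: assumes cond_iv shows "\<forall>r n0. \<exists>n\<ge>n0. good N fs ws n r"
proof (intro allI)
  fix r n0
  obtain nk where sm: "strict_mono nk" and pos: "\<forall>k. 0 < nk k"
    and a: "\<forall>m. \<forall>i<N. filterlim (\<lambda>k. norm (Wprod (fs i) (ws i) m (nk k))) at_top sequentially"
    and b: "\<forall>\<epsilon>>0. \<forall>K M. \<exists>k\<ge>K. \<forall>i<N. \<forall>l<N. i \<noteq> l \<longrightarrow>
                  ((fs l ^^ nk k) ` {..<M} \<inter> (fs i ^^ nk k) ` {..<M} = {} \<and>
                   (\<forall>j \<in> (fs l ^^ nk k) ` {..<M} \<inter> (fs i ^^ nk k) ` (UNIV - {..<M}).
                      norm (Wprod (fs i) (ws i) (inv (fs i ^^ nk k) j) (nk k)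
                            / Wprod (fs l) (ws l) (inv (fs l ^^ nk k) j) (nk k)) < \<epsilon>))"
    using assms unfolding cond_iv_def by blast
  have ev1: "\<forall>\<^sub>F k in sequentially. n0 \<le> nk k"
    unfolding eventually_sequentially using seq_suble[OF sm] le_trans by blast
  have "\<forall>m\<in>{..<r}. \<forall>i\<in>{..<N}. \<forall>\<^sub>F k in sequentially. real r < norm (Wprod (fs i) (ws i) m (nk k))"
  proof (intro ballI)
    fix m i assume "i \<in> {..<N}"
    hence "filterlim (\<lambda>k. norm (Wprod (fs i) (ws i) m (nk k))) at_top sequentially" using a by auto
    thus "\<forall>\<^sub>F k in sequentially. real r < norm (Wprod (fs i) (ws i) m (nk k))"
      unfolding filterlim_at_top_dense by blast
  qed
  hence "\<forall>\<^sub>F k in sequentially. \<forall>m\<in>{..<r}. \<forall>i\<in>{..<N}. real r < norm (Wprod (fs i) (ws i) m (nk k))"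
    by (intro eventually_ball_finite ballI) (auto intro!: eventually_ball_finite)
  with ev1 have "\<forall>\<^sub>F k in sequentially. n0 \<le> nk k \<and> (\<forall>m\<in>{..<r}. \<forall>i\<in>{..<N}. real r < norm (Wprod (fs i) (ws i) m (nk k)))"
    by (rule eventually_conj)
  then obtain K where K: "\<And>k. K \<le> k \<Longrightarrow> n0 \<le> nk k \<and> (\<forall>m\<in>{..<r}. \<forall>i\<in>{..<N}. real r < norm (Wprod (fs i) (ws i) m (nk k)))"
    unfolding eventually_sequentially by blast
  have e: "(1::real) / (r + 1) > 0" by simp
  obtain k where k: "k \<ge> K" and kb: "\<forall>i<N. \<forall>l<N. i \<noteq> l \<longrightarrow>
                  ((fs l ^^ nk k) ` {..<r} \<inter> (fs i ^^ nk k) ` {..<r} = {} \<and>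
                   (\<forall>j \<in> (fs l ^^ nk k) ` {..<r} \<inter> (fs i ^^ nk k) ` (UNIV - {..<r}).
                      norm (Wprod (fs i) (ws i) (inv (fs i ^^ nk k) j) (nk k)
                            / Wprod (fs l) (ws l) (inv (fs l ^^ nk k) j) (nk k)) < 1 / (r + 1)))"
    using b e by blast
  show "\<exists>n\<ge>n0. good N fs ws n r"
  proof (intro exI[of _ "nk k"] conjI)
    show "n0 \<le> nk k" using K[OF k] by blast
    show "good N fs ws (nk k) r" unfolding good_def
    proof (intro conjI allI impI)
      fix m i assume "m < r" "i < N"
      thus "real r < norm (Wprod (fs i) (ws i) m (nk k))" using K[OF k] by blast
    next
      fix i l assume il: "i < N" "l < N" "i \<noteq> l"
      thus "(fs l ^^ nk k) ` {..<r} \<inter> (fs i ^^ nk k) ` {..<r} = {}" using kb by blast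
      fix m1 m' assume m: "m1 < r" "r \<le> m'" "(fs l ^^ nk k) m1 = (fs i ^^ nk k) m'"
      define j where "j = (fs l ^^ nk k) m1"
      have "m' \<in> UNIV - {..<r}" "m1 \<in> {..<r}" using m by auto
      hence "j \<in> (fs l ^^ nk k) ` {..<r} \<inter> (fs i ^^ nk k) ` (UNIV - {..<r})" using m unfolding j_def by blast
      hence q: "norm (Wprod (fs i) (ws i) (inv (fs i ^^ nk k) j) (nk k)
                            / Wprod (fs l) (ws l) (inv (fs l ^^ nk k) j) (nk k)) < 1 / (r + 1)" using kb il by blast
      have "inv (fs i ^^ nk k) j = m'" using inv_f_f[OF inj_fpow[OF il(1)]] m(3) unfolding j_def by metis
      moreover have "inv (fs l ^^ nk k) j = m1" using inv_f_f[OF inj_fpow[OF il(2)]] unfolding j_def by metis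
      ultimately have q: "norm (Wprod (fs i) (ws i) m' (nk k) / Wprod (fs l) (ws l) m1 (nk k)) < 1 / (r + 1)"
        using q by simp
      hence "norm (Wprod (fs i) (ws i) m' (nk k) / Wprod (fs l) (ws l) m1 (nk k)) * (r + 1) < 1"
        by (simp add: field_simps)
      moreover have "norm (Wprod (fs i) (ws i) m' (nk k) / Wprod (fs l) (ws l) m1 (nk k)) * r \<le> 
          norm (Wprod (fs i) (ws i) m' (nk k) / Wprod (fs l) (ws l) m1 (nk k)) * (r + 1)"
        by (intro mult_left_mono) auto
      ultimately show "norm (Wprod (fs i) (ws i) m' (nk k) / Wprod (fs l) (ws l) m1 (nk k)) * r < 1" by linarith
    qed
  qed
qed

end

definition Sop :: "(nat \<Rightarrow> nat) \<Rightarrow> (nat \<Rightarrow> 'a::real_normed_field) \<Rightarrow> nat \<Rightarrow> (nat \<Rightarrow> 'a) \<Rightarrow> (nat \<Rightarrow> 'a)" where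
  "Sop f w n y = (\<lambda>t. if t \<in> range (f^^n) then y (inv (f^^n) t) / Wprod f w (inv (f^^n) t) n else 0)"

lemma Sop_at: "inj (f^^n) \<Longrightarrow> Sop f w n y ((f^^n) m) = y m / Wprod f w m n"
  unfolding Sop_def by simp

lemma psd_inj: "pseudo_shift_data f w \<Longrightarrow> inj (f ^^ n)"
  using fpow_strict_mono strict_mono_imp_inj_on unfolding pseudo_shift_data_def by blast

lemma Sop_out: "t \<notin> range (f^^n) \<Longrightarrow> Sop f w n y t = 0"
  unfolding Sop_def by simp

context fixes p :: real assumes p1: "1 \<le> p" begin

lemma lp_small:
  assumes z: "\<And>k. K0 \<le> k \<Longrightarrow> (z k :: nat \<Rightarrow> 'a::real_normed_vector) \<in> lp_space p \<and> (\<Sum>m. norm (z k m) powr p) \<le> C * inverse (real (Suc k)) powr p"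
    and C: "0 \<le> C"
  shows "(\<lambda>k. lp_dist p (z k) (\<lambda>_. 0)) \<longlonglongrightarrow> 0"
proof (rule tendsto_sandwich[of "\<lambda>_. 0" _ _ "\<lambda>k. (C * inverse (real (Suc k)) powr p) powr (1/p)"])
  show "\<forall>\<^sub>F n in sequentially. 0 \<le> lp_dist p (z n) (\<lambda>_. 0)" by (simp add: lp_dist_nonneg)
  show "\<forall>\<^sub>F n in sequentially. lp_dist p (z n) (\<lambda>_. 0) \<le> (C * inverse (real (Suc n)) powr p) powr (1/p)"
    unfolding eventually_sequentially
  proof (intro exI[of _ K0] allI impI)
    fix k assume k: "K0 \<le> k"
    have "0 \<le> (\<Sum>m. norm (z k m) powr p)" using z[OF k] by (intro suminf_nonneg) (auto simp: lp_space_def)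
    thus "lp_dist p (z k) (\<lambda>_. 0) \<le> (C * inverse (real (Suc k)) powr p) powr (1/p)"
      unfolding lp_dist_def using z[OF k] p1 by (auto intro!: powr_mono2)
  qed
  have "(\<lambda>k. inverse (real (Suc k)) powr p) \<longlonglongrightarrow> 0"
    using p1 by (intro tendsto_zero_powrI LIMSEQ_inverse_real_of_nat) auto
  hence "(\<lambda>k. C * inverse (real (Suc k)) powr p) \<longlonglongrightarrow> 0"
    using tendsto_mult_right_zero by blast
  thus "(\<lambda>k. (C * inverse (real (Suc k)) powr p) powr (1/p)) \<longlonglongrightarrow> 0"
    using p1 C by (intro tendsto_zero_powrI) auto
qed simp

end

locale psctx = psd N fs ws for N :: nat and fs :: "nat \<Rightarrow> nat \<Rightarrow> nat" and ws :: "nat \<Rightarrow> nat \<Rightarrow> 'a::real_normed_field" +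
  fixes p :: real
  assumes p1: "1 \<le> p"
begin

lemma Sop_c00: assumes j: "j < N" and y: "y \<in> c00" shows "Sop (fs j) (ws j) n y \<in> c00"
proof -
  obtain M where M: "\<And>m. M \<le> m \<Longrightarrow> y m = 0" using y by (auto simp: c00_def)
  have sm: "strict_mono (fs j ^^ n)" using ps[OF j] fpow_strict_mono by (auto simp: pseudo_shift_data_def)
  have "Sop (fs j) (ws j) n y t = 0" if t: "(fs j ^^ n) M \<le> t" for t
  proof (cases "t \<in> range (fs j ^^ n)")
    case True
    then obtain m where m: "t = (fs j ^^ n) m" by auto
    have "M \<le> m" using t m sm by (metis not_le strict_mono_less)
    moreover have "Sop (fs j) (ws j) n y ((fs j ^^ n) m) = y m / Wprod (fs j) (ws j) m n"
      by (rule Sop_at[OF psd_inj[OF ps[OF j]]])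
    ultimately show ?thesis using m M by simp
  qed (simp add: Sop_out)
  thus ?thesis unfolding c00_def by blast
qed

lemma T_Sop: assumes j: "j < N" shows "(pshift (fs j) (ws j) ^^ n) (Sop (fs j) (ws j) n y) = y"
  by (rule ext) (simp add: pshift_pow Sop_at[OF psd_inj[OF ps[OF j]]] Wprod_nz[OF ps[OF j]])

lemma T_c00_zero: assumes i: "i < N" and y: "\<And>m. M \<le> m \<Longrightarrow> y m = 0" and n: "M \<le> n"
  shows "(pshift (fs i) (ws i) ^^ n) y = (\<lambda>_. 0)"
proof (rule ext)
  fix m
  have "m + n \<le> (fs i ^^ n) m" using fpow_ge[of "fs i"] psd_gt[OF ps[OF i]] by blast
  thus "(pshift (fs i) (ws i) ^^ n) y m = 0" using y n by (simp add: pshift_pow)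
qed

lemma T_c00_lim: assumes i: "i < N" and y: "y \<in> c00" and nk: "strict_mono nk"
  shows "(\<lambda>k. lp_dist p ((pshift (fs i) (ws i) ^^ nk k) y) (\<lambda>_. 0)) \<longlonglongrightarrow> 0"
proof -
  obtain M where M: "\<And>m. M \<le> m \<Longrightarrow> y m = 0" using y by (auto simp: c00_def)
  have "\<forall>\<^sub>F k in sequentially. lp_dist p ((pshift (fs i) (ws i) ^^ nk k) y) (\<lambda>_. 0) = 0"
    unfolding eventually_sequentially
  proof (intro exI[of _ M] allI impI)
    fix k assume "M \<le> k"
    hence "M \<le> nk k" using seq_suble[OF nk, of k] by simp
    thus "lp_dist p ((pshift (fs i) (ws i) ^^ nk k) y) (\<lambda>_. 0) = 0"
      using T_c00_zero[OF i M] by simp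
  qed
  thus ?thesis by (rule tendsto_eventually)
qed


lemma Sop_lim: assumes j: "j < N" and y: "y \<in> c00" and gd: "\<And>k. good N fs ws (nk k) (Suc k)"
  shows "(\<lambda>k. lp_dist p (Sop (fs j) (ws j) (nk k) y) (\<lambda>_. 0)) \<longlonglongrightarrow> 0"
proof -
  obtain M where M: "\<And>m. M \<le> m \<Longrightarrow> y m = 0" using y by (auto simp: c00_def)
  define C where "C = (\<Sum>m<M. norm (y m) powr p)"
  show ?thesis
  proof (rule lp_small[OF p1, of M _ C])
    show "0 \<le> C" unfolding C_def by (simp add: sum_nonneg)
    fix k assume k: "M \<le> k"
    define n where "n = nk k"
    define g where "g = fs j ^^ n"
    have inj: "inj g" unfolding g_def by (rule psd_inj[OF ps[OF j]])
    let ?z = "Sop (fs j) (ws j) n y"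
    have zg: "?z (g m) = y m / Wprod (fs j) (ws j) m n" for m unfolding g_def
      by (rule Sop_at[OF psd_inj[OF ps[OF j]]])
    have out: "?z t = 0" if t: "t \<notin> g ` {..<M}" for t
    proof (cases "t \<in> range g")
      case True then obtain m where m: "t = g m" by auto
      hence "M \<le> m" using t by (auto simp: not_less)
      thus ?thesis using zg m M by simp
    qed (simp add: Sop_out g_def)
    have fin: "?z \<in> lp_space p \<and> (\<Sum>t. norm (?z t) powr p) = (\<Sum>t\<in>g ` {..<M}. norm (?z t) powr p)"
      by (rule lp_finite[OF p1]) (use out in blast)+
    have "(\<Sum>t\<in>g ` {..<M}. norm (?z t) powr p) = (\<Sum>m<M. norm (?z (g m)) powr p)"
      using sum.reindex[of g "{..<M}" "\<lambda>t. norm (?z t) powr p"] inj_on_subset[OF inj] by simp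
    also have "\<dots> \<le> (\<Sum>m<M. norm (y m) powr p * inverse (real (Suc k)) powr p)"
    proof (rule sum_mono)
      fix m assume "m \<in> {..<M}"
      hence "m < Suc k" using k by simp
      hence W: "real (Suc k) < norm (Wprod (fs j) (ws j) m n)" using good_big[OF gd[of k] _ j] unfolding n_def by blast
      have "norm (?z (g m)) = norm (y m) / norm (Wprod (fs j) (ws j) m n)" by (simp add: zg norm_divide)
      also have "\<dots> = norm (y m) * inverse (norm (Wprod (fs j) (ws j) m n))" by (simp add: divide_inverse)
      also have "\<dots> \<le> norm (y m) * inverse (real (Suc k))"
        using W by (intro mult_left_mono le_imp_inverse_le) auto
      finally have "norm (?z (g m)) powr p \<le> (norm (y m) * inverse (real (Suc k))) powr p"
        using p1 by (intro powr_mono2) auto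
      thus "norm (?z (g m)) powr p \<le> norm (y m) powr p * inverse (real (Suc k)) powr p"
        by (simp add: powr_mult)
    qed
    also have "\<dots> = C * inverse (real (Suc k)) powr p" unfolding C_def by (simp add: sum_distrib_right)
    finally show "?z \<in> lp_space p \<and> (\<Sum>t. norm (Sop (fs j) (ws j) (nk k) y t) powr p) \<le> C * inverse (real (Suc k)) powr p"
      using fin by (simp add: n_def)
  qed
qed

lemma cross_lim: assumes j: "j < N" and i: "i < N" and ij: "i \<noteq> j" and y: "y \<in> c00"
  and gd: "\<And>k. good N fs ws (nk k) (Suc k)"
  shows "(\<lambda>k. lp_dist p ((pshift (fs i) (ws i) ^^ nk k) (Sop (fs j) (ws j) (nk k) y)) (\<lambda>_. 0)) \<longlonglongrightarrow> 0"
proof -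
  obtain M where M: "\<And>m. M \<le> m \<Longrightarrow> y m = 0" using y by (auto simp: c00_def)
  define C where "C = (\<Sum>m<M. norm (y m) powr p)"
  show ?thesis
  proof (rule lp_small[OF p1, of M _ C])
    show "0 \<le> C" unfolding C_def by (simp add: sum_nonneg)
    fix k assume k: "M \<le> k"
    define n where "n = nk k"
    define g where "g = fs j ^^ n"
    define h where "h = fs i ^^ n"
    have inj: "inj g" unfolding g_def by (rule psd_inj[OF ps[OF j]])
    have injh: "inj h" unfolding h_def by (rule psd_inj[OF ps[OF i]])
    have smg: "strict_mono g" unfolding g_def using ps[OF j] fpow_strict_mono by (auto simp: pseudo_shift_data_def)
    let ?z = "(pshift (fs i) (ws i) ^^ n) (Sop (fs j) (ws j) n y)"
    have zg: "Sop (fs j) (ws j) n y (g m) = y m / Wprod (fs j) (ws j) m n" for m unfolding g_def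
      by (rule Sop_at[OF psd_inj[OF ps[OF j]]])
    have zz: "?z m' = Wprod (fs i) (ws i) m' n * Sop (fs j) (ws j) n y (h m')" for m'
      by (simp add: pshift_pow h_def)
    define A where "A = {m'. h m' \<in> g ` {..<M}}"
    define \<phi> where "\<phi> m' = inv g (h m')" for m'
    have phi: "g (\<phi> m') = h m'" "\<phi> m' < M" if "m' \<in> A" for m'
      using that inj unfolding A_def \<phi>_def by (auto simp: inv_f_f)
    have finA: "finite A"
    proof (rule finite_subset[of _ "{..<g M}"])
      show "A \<subseteq> {..<g M}"
      proof
        fix m' assume "m' \<in> A"
        hence a: "h m' = g (\<phi> m')" "\<phi> m' < M" using phi[of m'] by auto
        have "m' + n \<le> h m'" unfolding h_def by (rule fpow_ge) (rule psd_gt[OF ps[OF i]])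
        moreover have "h m' < g M" using a smg by (simp add: strict_mono_less)
        ultimately show "m' \<in> {..<g M}" by simp
      qed
    qed simp
    have out: "?z t = 0" if t: "t \<notin> A" for t
    proof (cases "h t \<in> range g")
      case True then obtain m where m: "h t = g m" by auto
      hence "M \<le> m" using t by (auto simp: not_less A_def)
      thus ?thesis using zg m M zz by simp
    next
      case False thus ?thesis using zz by (simp add: Sop_out g_def)
    qed
    have fin: "?z \<in> lp_space p \<and> (\<Sum>t. norm (?z t) powr p) = (\<Sum>t\<in>A. norm (?z t) powr p)"
      by (rule lp_finite[OF p1 finA]) (use out in blast)
    have injphi: "inj_on \<phi> A"
    proof (rule inj_onI)
      fix a b assume "a \<in> A" "b \<in> A" "\<phi> a = \<phi> b"
      hence "h a = h b" using phi by metis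
      thus "a = b" using injh by (simp add: inj_eq)
    qed
    have "(\<Sum>t\<in>A. norm (?z t) powr p) \<le> (\<Sum>m'\<in>A. norm (y (\<phi> m')) powr p * inverse (real (Suc k)) powr p)"
    proof (rule sum_mono)
      fix m' assume m': "m' \<in> A"
      define m where "m = \<phi> m'"
      have mM: "m < M" "g m = h m'" using phi[OF m'] by (auto simp: m_def)
      have "m' \<ge> Suc k"
      proof (rule ccontr)
        assume "\<not> Suc k \<le> m'"
        hence "m' \<in> {..<Suc k}" "m \<in> {..<Suc k}" using mM k by auto
        hence "h m' \<in> (fs j ^^ nk k) ` {..<Suc k} \<inter> (fs i ^^ nk k) ` {..<Suc k}"
          using mM(2) unfolding g_def h_def n_def by (metis IntI image_eqI)
        thus False using good_disj[OF gd[of k] i j ij] by blast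
      qed
      hence rat: "norm (Wprod (fs i) (ws i) m' n / Wprod (fs j) (ws j) m n) * real (Suc k) < 1"
        using good_ratio[OF gd[of k] i j ij mM(1)[THEN order.strict_trans2] \<open>m' \<ge> Suc k\<close>] mM(2) k unfolding g_def h_def n_def by simp
      have "Sop (fs j) (ws j) n y (h m') = y m / Wprod (fs j) (ws j) m n" using zg[of m] mM(2) by simp
      hence "norm (?z m') = norm (Wprod (fs i) (ws i) m' n / Wprod (fs j) (ws j) m n) * norm (y m)"
        using zz by (simp add: norm_mult norm_divide)
      also have "\<dots> \<le> norm (y m) * inverse (real (Suc k))"
      proof -
        have "norm (Wprod (fs i) (ws i) m' n / Wprod (fs j) (ws j) m n) \<le> inverse (real (Suc k))"
          using rat by (simp add: field_simps)
        thus ?thesis by (simp add: mult.commute mult_left_mono)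
      qed
      finally have "norm (?z m') powr p \<le> (norm (y m) * inverse (real (Suc k))) powr p"
        using p1 by (intro powr_mono2) auto
      thus "norm (?z m') powr p \<le> norm (y (\<phi> m')) powr p * inverse (real (Suc k)) powr p"
        by (simp add: powr_mult m_def)
    qed
    also have "\<dots> = (\<Sum>m'\<in>A. norm (y (\<phi> m')) powr p) * inverse (real (Suc k)) powr p"
      by (simp add: sum_distrib_right)
    also have "(\<Sum>m'\<in>A. norm (y (\<phi> m')) powr p) = (\<Sum>m\<in>\<phi> ` A. norm (y m) powr p)"
      using sum.reindex[OF injphi, of "\<lambda>m. norm (y m) powr p"] by simp
    also have "\<dots> \<le> C" unfolding C_def using phi by (intro sum_mono2) auto
    finally have "(\<Sum>t\<in>A. norm (?z t) powr p) \<le> C * inverse (real (Suc k)) powr p"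
      by (simp add: mult_right_mono)
    thus "?z \<in> lp_space p \<and> (\<Sum>t. norm (((pshift (fs i) (ws i) ^^ nk k) (Sop (fs j) (ws j) (nk k) y)) t) powr p) \<le> C * inverse (real (Suc k)) powr p"
      using fin by (simp add: n_def)
  qed
qed

end

lemma sum_fun_apply: "(\<Sum>j\<in>A. (a j :: 'b \<Rightarrow> 'c::comm_monoid_add)) x = (\<Sum>j\<in>A. a j x)"
  by (induction A rule: infinite_finite_induct) auto

lemma pshift_pow_sum: "(pshift f w ^^ n) (\<Sum>j\<in>A. a j) = (\<Sum>j\<in>A. (pshift f w ^^ n) (a j))"
  by (rule ext) (simp add: pshift_pow sum_fun_apply sum_distrib_left)

lemma pshift_pow_add: "(pshift f w ^^ n) (a + b) = (pshift f w ^^ n) a + (pshift f w ^^ n) b"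
  by (rule ext) (simp add: pshift_pow distrib_left)

lemma lp_dist_add_left: "lp_dist p a (a + b) = lp_dist p b (\<lambda>_. 0 :: 'a::real_normed_vector)"
  unfolding lp_dist_def by (simp add: norm_minus_commute)

lemma psum_dist_sym: "psum_dist R (lp_dist p) x y = psum_dist R (lp_dist p) y x"
  unfolding psum_dist_def by (simp add: lp_dist_sym[of p "x _"])

lemma G_seq: assumes G: "\<forall>r n0. \<exists>n\<ge>n0. good N fs ws n r"
  shows "\<exists>nk. strict_mono nk \<and> (\<forall>k. 0 < nk k) \<and> (\<forall>k. good N fs ws (nk k) (Suc k))"
proof -
  define h where "h r n0 = (SOME n. n0 \<le> n \<and> good N fs ws n r)" for r n0
  have h: "n0 \<le> h r n0 \<and> good N fs ws (h r n0) r" for r n0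
  proof -
    obtain n where "n0 \<le> n \<and> good N fs ws n r" using G by blast
    thus ?thesis unfolding h_def by (rule someI)
  qed
  show ?thesis using seqc_props[of h "good N fs ws", OF h] by blast
qed

context psctx
begin

lemma G_dhc: assumes G: "\<forall>r n0. \<exists>n\<ge>n0. good N fs ws n r"
  shows "disjoint_hc_criterion (lp_space p) (lp_dist p) (\<lambda>_. 0) N (\<lambda>i. pshift (fs i) (ws i))"
proof -
  obtain nk where nk: "strict_mono nk" "\<And>k. good N fs ws (nk k) (Suc k)" using G_seq[OF G] by blast
  show ?thesis unfolding disjoint_hc_criterion_def
  proof (intro exI[of _ nk] exI[of _ c00] exI[of _ "\<lambda>_. c00"] exI[of _ "\<lambda>j k. Sop (fs j) (ws j) (nk k)"] conjI allI impI ballI)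
    show "strict_mono nk" by (rule nk)
    show "sp_dense (lp_space p) (lp_dist p) c00" by (rule c00_dense[OF p1])
    fix j assume j: "j < N"
    show "sp_dense (lp_space p) (lp_dist p) c00" by (rule c00_dense[OF p1])
    { fix k and y :: "nat \<Rightarrow> 'a" assume "y \<in> c00"
      thus "Sop (fs j) (ws j) (nk k) y \<in> lp_space p" using Sop_c00[OF j] c00_lp[OF p1] by blast }
    { fix y :: "nat \<Rightarrow> 'a" assume "y \<in> c00"
      thus "(\<lambda>k. lp_dist p ((pshift (fs j) (ws j) ^^ nk k) y) (\<lambda>_. 0)) \<longlonglongrightarrow> 0"
        by (rule T_c00_lim[OF j _ nk(1)]) }
    { fix y :: "nat \<Rightarrow> 'a" assume "y \<in> c00"
      thus "(\<lambda>k. lp_dist p (Sop (fs j) (ws j) (nk k) y) (\<lambda>_. 0)) \<longlonglongrightarrow> 0"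
        by (rule Sop_lim[OF j _ nk(2)]) }
  next
    fix i j and y :: "nat \<Rightarrow> 'a" assume i: "i < N" and j: "j < N" and y: "y \<in> c00"
    show "(\<lambda>k. lp_dist p ((pshift (fs i) (ws i) ^^ nk k) (Sop (fs j) (ws j) (nk k) y)) (if i = j then y else (\<lambda>_. 0))) \<longlonglongrightarrow> 0"
    proof (cases "i = j")
      case True thus ?thesis using T_Sop[OF j] by simp
    next
      case False thus ?thesis using cross_lim[OF j i False y nk(2)] by simp
    qed
  qed
qed

end

lemma psum_dist_zero: "psum_dist R d x (\<lambda>_. \<lambda>_. 0) = (\<Sum>r<R. d (x r) (\<lambda>_. 0))"
  by (simp add: psum_dist_def)

context psctx
begin

lemma G_bc: assumes G: "\<forall>r n0. \<exists>n\<ge>n0. good N fs ws n r"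
  shows "disjoint_bc_criterion (psum_carrier R (lp_space p) (\<lambda>_. 0)) (psum_dist R (lp_dist p)) (\<lambda>_. \<lambda>_. 0) N
           (\<lambda>i. psum_op R (\<lambda>_. 0) (pshift (fs i) (ws i)))"
proof -
  obtain nk where nk: "strict_mono nk" "\<And>k. good N fs ws (nk k) (Suc k)" using G_seq[OF G] by blast
  define Y0 where "Y0 = psum_carrier R (c00 :: (nat \<Rightarrow> 'a) set) (\<lambda>_. 0)"
  define Sk where "Sk k y = (\<lambda>r. if r < R then (\<Sum>j<N. Sop (fs j) (ws j) (nk k) (y j r)) else (\<lambda>_. 0))"
    for k and y :: "nat \<Rightarrow> nat \<Rightarrow> nat \<Rightarrow> 'a"
  have Y0sub: "Y0 \<subseteq> psum_carrier R (lp_space p) (\<lambda>_. 0)"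
    unfolding Y0_def psum_carrier_def using c00_lp[OF p1] by blast
  have Sop_lp: "j < N \<Longrightarrow> v \<in> c00 \<Longrightarrow> Sop (fs j) (ws j) n v \<in> lp_space p" for j n v
    using Sop_c00 c00_lp[OF p1] by blast
  have TSop_lp: "i < N \<Longrightarrow> j < N \<Longrightarrow> v \<in> c00 \<Longrightarrow> (pshift (fs i) (ws i) ^^ m) (Sop (fs j) (ws j) n v) \<in> lp_space p" for i j n v m
    using Sop_lp lp_pshift_pow[OF p1 ps] by blast
  have Sk_car: "Sk k y \<in> psum_carrier R (lp_space p) (\<lambda>_. 0)" if y: "\<forall>i<N. y i \<in> Y0" for k y
    unfolding Sk_def psum_carrier_def using y Sop_lp by (auto simp: Y0_def psum_carrier_def intro!: lp_sum[OF p1])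
  have L1: "(\<lambda>k. psum_dist R (lp_dist p) (Sk k y) (\<lambda>_. \<lambda>_. 0)) \<longlonglongrightarrow> 0" if y: "\<forall>i<N. y i \<in> Y0" for y
    unfolding psum_dist_zero
  proof (rule tendsto_null_sum)
    fix r assume r: "r \<in> {..<R}"
    have "(\<lambda>k. lp_dist p (\<Sum>j<N. Sop (fs j) (ws j) (nk k) (y j r)) (\<lambda>_. 0)) \<longlonglongrightarrow> 0"
      using y r by (intro lp_tendsto_sum[OF p1] Sop_lim[OF _ _ nk(2)] Sop_lp) (auto simp: Y0_def psum_carrier_def)
    thus "(\<lambda>k. lp_dist p (Sk k y r) (\<lambda>_. 0)) \<longlonglongrightarrow> 0" using r by (simp add: Sk_def)
  qed
  have L2: "(\<lambda>k. psum_dist R (lp_dist p) ((psum_op R (\<lambda>_. 0) (pshift (fs i) (ws i)) ^^ nk k) (Sk k y)) (y i)) \<longlonglongrightarrow> 0"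
    if y: "\<forall>i<N. y i \<in> Y0" and i: "i < N" for y i
  proof -
    have comp: "(\<lambda>k. lp_dist p ((pshift (fs i) (ws i) ^^ nk k) (Sk k y r)) (y i r)) \<longlonglongrightarrow> 0" if r: "r < R" for r
    proof -
      have yc: "j < N \<Longrightarrow> y j r \<in> c00" for j using y r by (auto simp: Y0_def psum_carrier_def)
      have eq: "lp_dist p ((pshift (fs i) (ws i) ^^ nk k) (Sk k y r)) (y i r)
          = lp_dist p (\<Sum>j\<in>{..<N} - {i}. (pshift (fs i) (ws i) ^^ nk k) (Sop (fs j) (ws j) (nk k) (y j r))) (\<lambda>_. 0)" for k
      proof -
        let ?S = "(\<Sum>j\<in>{..<N} - {i}. (pshift (fs i) (ws i) ^^ nk k) (Sop (fs j) (ws j) (nk k) (y j r)))"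
        have "(pshift (fs i) (ws i) ^^ nk k) (Sk k y r) = (\<Sum>j<N. (pshift (fs i) (ws i) ^^ nk k) (Sop (fs j) (ws j) (nk k) (y j r)))"
          using r by (simp add: Sk_def pshift_pow_sum)
        also have "\<dots> = (pshift (fs i) (ws i) ^^ nk k) (Sop (fs i) (ws i) (nk k) (y i r)) + ?S"
          using i by (intro sum.remove) auto
        also have "(pshift (fs i) (ws i) ^^ nk k) (Sop (fs i) (ws i) (nk k) (y i r)) = y i r" by (rule T_Sop[OF i])
        finally have h: "(pshift (fs i) (ws i) ^^ nk k) (Sk k y r) = y i r + ?S" .
        have "lp_dist p ((pshift (fs i) (ws i) ^^ nk k) (Sk k y r)) (y i r) = lp_dist p (y i r) ((pshift (fs i) (ws i) ^^ nk k) (Sk k y r))"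
          by (rule lp_dist_sym)
        also have "\<dots> = lp_dist p (y i r) (y i r + ?S)" by (simp only: h)
        also have "\<dots> = lp_dist p ?S (\<lambda>_. 0)" by (rule lp_dist_add_left)
        finally show ?thesis .
      qed
      show ?thesis unfolding eq
        using i yc by (intro lp_tendsto_sum[OF p1] cross_lim[OF _ _ _ _ nk(2)] TSop_lp) auto
    qed
    have "psum_dist R (lp_dist p) ((psum_op R (\<lambda>_. 0) (pshift (fs i) (ws i)) ^^ nk k) (Sk k y)) (y i) =
       (\<Sum>r<R. lp_dist p ((pshift (fs i) (ws i) ^^ nk k) (Sk k y r)) (y i r))" for k
      using psum_pow[OF Sk_car[OF y], of "nk k"] by (simp add: psum_dist_def)
    moreover have "(\<lambda>k. \<Sum>r<R. lp_dist p ((pshift (fs i) (ws i) ^^ nk k) (Sk k y r)) (y i r)) \<longlonglongrightarrow> 0"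
      by (rule tendsto_null_sum) (use comp in auto)
    ultimately show ?thesis by simp
  qed
  show ?thesis unfolding disjoint_bc_criterion_def
  proof (intro exI[of _ nk] exI[of _ Y0] exI[of _ Sk] conjI allI impI ballI)
    show "strict_mono nk" by (rule nk)
    show "sp_dense (psum_carrier R (lp_space p) (\<lambda>_. 0)) (psum_dist R (lp_dist p)) Y0"
      unfolding sp_dense_def using Y0sub psum_approx[OF p1 _ c00_dense[OF p1]] unfolding Y0_def by blast
    fix k y assume "\<forall>i<N. y i \<in> Y0"
    thus "Sk k y \<in> psum_carrier R (lp_space p) (\<lambda>_. 0)" by (rule Sk_car)
  next
    fix i y assume i: "i < N" and y: "y \<in> Y0"
    have "psum_dist R (lp_dist p) ((psum_op R (\<lambda>_. 0) (pshift (fs i) (ws i)) ^^ nk k) y) (\<lambda>_. \<lambda>_. 0) =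
       (\<Sum>r<R. lp_dist p ((pshift (fs i) (ws i) ^^ nk k) (y r)) (\<lambda>_. 0))" for k
      using psum_pow[OF Y0sub[THEN subsetD, OF y], of "nk k"] by (simp add: psum_dist_def)
    moreover have "(\<lambda>k. \<Sum>r<R. lp_dist p ((pshift (fs i) (ws i) ^^ nk k) (y r)) (\<lambda>_. 0)) \<longlonglongrightarrow> 0"
      using y i by (intro tendsto_null_sum T_c00_lim[OF _ _ nk(1)]) (auto simp: Y0_def psum_carrier_def)
    ultimately show "(\<lambda>k. psum_dist R (lp_dist p) ((psum_op R (\<lambda>_. 0) (pshift (fs i) (ws i)) ^^ nk k) y) (\<lambda>_. \<lambda>_. 0)) \<longlonglongrightarrow> 0"
      by simp
  next
    fix \<epsilon> :: real and K y assume e: "\<epsilon> > 0" and y: "\<forall>i<N. y i \<in> Y0"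
    have ev1: "\<forall>\<^sub>F k in sequentially. psum_dist R (lp_dist p) (Sk k y) (\<lambda>_. \<lambda>_. 0) < \<epsilon>"
      using L1[OF y] e by (rule order_tendstoD)
    have "\<forall>i\<in>{..<N}. \<forall>\<^sub>F k in sequentially. psum_dist R (lp_dist p) ((psum_op R (\<lambda>_. 0) (pshift (fs i) (ws i)) ^^ nk k) (Sk k y)) (y i) < \<epsilon>"
    proof
      fix i assume "i \<in> {..<N}"
      hence "(\<lambda>k. psum_dist R (lp_dist p) ((psum_op R (\<lambda>_. 0) (pshift (fs i) (ws i)) ^^ nk k) (Sk k y)) (y i)) \<longlonglongrightarrow> 0"
        using L2[OF y] by auto
      thus "\<forall>\<^sub>F k in sequentially. psum_dist R (lp_dist p) ((psum_op R (\<lambda>_. 0) (pshift (fs i) (ws i)) ^^ nk k) (Sk k y)) (y i) < \<epsilon>"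
        using e by (rule order_tendstoD)
    qed
    hence ev2: "\<forall>\<^sub>F k in sequentially. \<forall>i\<in>{..<N}. psum_dist R (lp_dist p) ((psum_op R (\<lambda>_. 0) (pshift (fs i) (ws i)) ^^ nk k) (Sk k y)) (y i) < \<epsilon>"
      by (rule eventually_ball_finite[rotated]) simp
    obtain K' where K': "\<And>k. K' \<le> k \<Longrightarrow> psum_dist R (lp_dist p) (Sk k y) (\<lambda>_. \<lambda>_. 0) < \<epsilon> \<and>
       (\<forall>i\<in>{..<N}. psum_dist R (lp_dist p) ((psum_op R (\<lambda>_. 0) (pshift (fs i) (ws i)) ^^ nk k) (Sk k y)) (y i) < \<epsilon>)"
      using eventually_conj[OF ev1 ev2] unfolding eventually_sequentially by blast
    show "\<exists>k\<ge>K. psum_dist R (lp_dist p) (Sk k y) (\<lambda>_. \<lambda>_. 0) < \<epsilon> \<and>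
       (\<forall>i<N. psum_dist R (lp_dist p) ((psum_op R (\<lambda>_. 0) (pshift (fs i) (ws i)) ^^ nk k) (Sk k y)) (y i) < \<epsilon>)"
      using K'[of "max K K'"] by (intro exI[of _ "max K K'"]) auto
  qed
qed

end

lemma open_pick: "sp_open Y d U \<Longrightarrow> U \<noteq> {} \<Longrightarrow> \<exists>u e. u \<in> U \<and> e > 0 \<and> (\<forall>y\<in>Y. d u y < e \<longrightarrow> y \<in> U)"
  unfolding sp_open_def by blast

context psctx
begin

lemma psum_pow_car: "x \<in> psum_carrier R (lp_space p) (\<lambda>_. 0) \<Longrightarrow> i < N \<Longrightarrow>
    (psum_op R (\<lambda>_. 0) (pshift (fs i) (ws i)) ^^ n) x \<in> psum_carrier R (lp_space p) (\<lambda>_. 0)"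
  using psum_pow[of x R "lp_space p" "\<lambda>_. 0" n "pshift (fs i) (ws i)"] lp_pshift_pow[OF p1 ps]
  by (auto simp: psum_carrier_def)

lemma dist_rewrite: "lp_dist p a (if i = j then y else (\<lambda>_. 0)) = lp_dist p (a - (if i = j then y else 0)) (\<lambda>_. 0 :: 'b::real_normed_vector)"
  by (cases "i = j") (simp_all add: lp_dist_0[of p a y])

lemma dhc_wm: assumes D: "disjoint_hc_criterion (lp_space p) (lp_dist p) (\<lambda>_. 0) N (\<lambda>i. pshift (fs i) (ws i))"
  shows "d_weakly_mixing (lp_space p) (lp_dist p) (\<lambda>_. 0) N (\<lambda>i. pshift (fs i) (ws i))"
proof -
  let ?C = "psum_carrier 2 (lp_space p) (\<lambda>_. 0 :: 'a)"
  let ?d = "psum_dist 2 (lp_dist p)"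
  let ?T = "\<lambda>i. pshift (fs i) (ws i)"
  obtain nk Y0 Ys Sjk where sm: "strict_mono nk" and dY0: "sp_dense (lp_space p) (lp_dist p) Y0"
    and dYs: "\<forall>j<N. sp_dense (lp_space p) (lp_dist p) (Ys j)"
    and Sin: "\<forall>j<N. \<forall>k. \<forall>y\<in>Ys j. Sjk j k y \<in> lp_space p"
    and c1: "\<forall>i<N. \<forall>y\<in>Y0. (\<lambda>k. lp_dist p ((?T i ^^ nk k) y) (\<lambda>_. 0)) \<longlonglongrightarrow> 0"
    and c2: "\<forall>j<N. \<forall>y\<in>Ys j. (\<lambda>k. lp_dist p (Sjk j k y) (\<lambda>_. 0)) \<longlonglongrightarrow> 0"
    and c3: "\<forall>i<N. \<forall>j<N. \<forall>y\<in>Ys j. (\<lambda>k. lp_dist p ((?T i ^^ nk k) (Sjk j k y)) (if i = j then y else (\<lambda>_. 0))) \<longlonglongrightarrow> 0"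
    using D unfolding disjoint_hc_criterion_def by blast
  have Y0lp: "Y0 \<subseteq> lp_space p" using dY0 by (simp add: sp_dense_def)
  have Yslp: "j < N \<Longrightarrow> Ys j \<subseteq> lp_space p" for j using dYs by (simp add: sp_dense_def)
  show ?thesis unfolding d_weakly_mixing_def d_top_transitive_def
  proof (intro allI impI)
    fix V U assume VU: "sp_open ?C ?d V \<and> V \<noteq> {} \<and> (\<forall>i<N. sp_open ?C ?d (U i) \<and> U i \<noteq> {})"
    obtain v eV where v: "v \<in> V" "eV > 0" "\<And>y. y \<in> ?C \<Longrightarrow> ?d v y < eV \<Longrightarrow> y \<in> V"
      using open_pick[of ?C ?d V] VU by blast
    have "\<forall>i. \<exists>u e. i < N \<longrightarrow> u \<in> U i \<and> e > 0 \<and> (\<forall>y\<in>?C. ?d u y < e \<longrightarrow> y \<in> U i)"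
      using open_pick VU by blast
    then obtain u eU where u: "\<And>i. i < N \<Longrightarrow> u i \<in> U i \<and> eU i > 0 \<and> (\<forall>y\<in>?C. ?d (u i) y < eU i \<longrightarrow> y \<in> U i)"
      by metis
    have vC: "v \<in> ?C" using VU v unfolding sp_open_def by blast
    have uC: "i < N \<Longrightarrow> u i \<in> ?C" for i using VU u unfolding sp_open_def by blast
    obtain v' where v': "v' \<in> psum_carrier 2 Y0 (\<lambda>_. 0)" "?d v v' < eV / 8"
      using psum_approx[OF p1 vC dY0, of "eV/8"] v by auto
    have "\<forall>i. \<exists>w. i < N \<longrightarrow> w \<in> psum_carrier 2 (Ys i) (\<lambda>_. 0) \<and> ?d (u i) w < eU i / 8"
    proof
      fix i show "\<exists>w. i < N \<longrightarrow> w \<in> psum_carrier 2 (Ys i) (\<lambda>_. 0) \<and> ?d (u i) w < eU i / 8"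
      proof (cases "i < N")
        case True
        have "eU i / 8 > 0" using u[OF True] by simp
        thus ?thesis using psum_approx[OF p1 uC[OF True], of "Ys i" "eU i / 8"] dYs True by blast
      qed simp
    qed
    then obtain u' where u': "\<And>i. i < N \<Longrightarrow> u' i \<in> psum_carrier 2 (Ys i) (\<lambda>_. 0) \<and> ?d (u i) (u' i) < eU i / 8"
      by metis
    have v'C: "v' \<in> ?C" using v' Y0lp by (auto simp: psum_carrier_def)
    have u'C: "i < N \<Longrightarrow> u' i \<in> ?C" for i using u' Yslp by (fastforce simp: psum_carrier_def)
    have u'Ys: "j < N \<Longrightarrow> r < 2 \<Longrightarrow> u' j r \<in> Ys j" for j r using u' by (auto simp: psum_carrier_def)
    have v'Y0: "r < 2 \<Longrightarrow> v' r \<in> Y0" for r using v' by (auto simp: psum_carrier_def)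
    define S where "S k r = (\<Sum>j<N. Sjk j k (u' j r))" for k r
    define x where "x k = (\<lambda>r. if r < 2 then v' r + S k r else (\<lambda>_. 0))" for k
    have Slp: "r < 2 \<Longrightarrow> S k r \<in> lp_space p" for k r
      unfolding S_def using Sin u'Ys by (intro lp_sum[OF p1]) auto
    have xC: "x k \<in> ?C" for k
      unfolding x_def psum_carrier_def using Slp v'Y0 Y0lp by (auto intro!: lp_add[OF p1])
    have A: "(\<lambda>k. ?d v' (x k)) \<longlonglongrightarrow> 0"
    proof -
      have "?d v' (x k) = (\<Sum>r<2. lp_dist p (S k r) (\<lambda>_. 0))" for k
        unfolding psum_dist_def x_def by (intro sum.cong) (auto simp: lp_dist_add_left)
      moreover have "(\<lambda>k. \<Sum>r<2. lp_dist p (S k r) (\<lambda>_. 0)) \<longlonglongrightarrow> 0"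
      proof (rule tendsto_null_sum)
        fix r :: nat assume "r \<in> {..<2}"
        thus "(\<lambda>k. lp_dist p (S k r) (\<lambda>_. 0)) \<longlonglongrightarrow> 0"
          unfolding S_def using Sin c2 u'Ys by (intro lp_tendsto_sum[OF p1]) auto
      qed
      ultimately show ?thesis by simp
    qed
    have B: "(\<lambda>k. ?d ((psum_op 2 (\<lambda>_. 0) (?T i) ^^ nk k) (x k)) (u' i)) \<longlonglongrightarrow> 0" if i: "i < N" for i
    proof -
      define b where "b j k r = (?T i ^^ nk k) (Sjk j k (u' j r)) - (if i = j then u' j r else 0)" for j k r
      have comp: "(?T i ^^ nk k) (x k r) - u' i r = (?T i ^^ nk k) (v' r) + (\<Sum>j<N. b j k r)" if r: "r < 2" for k r
      proof -
        have "(\<Sum>j<N. b j k r) = (\<Sum>j<N. (?T i ^^ nk k) (Sjk j k (u' j r))) - (\<Sum>j<N. (if i = j then u' j r else 0))"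
          unfolding b_def by (rule sum_subtractf)
        also have "(\<Sum>j<N. (if i = j then u' j r else 0)) = u' i r" using i by (simp add: sum.delta)
        finally have bs: "(\<Sum>j<N. b j k r) = (\<Sum>j<N. (?T i ^^ nk k) (Sjk j k (u' j r))) - u' i r" .
        show ?thesis using r unfolding bs by (simp add: x_def S_def pshift_pow_add pshift_pow_sum fun_eq_iff)
      qed
      have cr: "(\<lambda>k. lp_dist p ((?T i ^^ nk k) (x k r)) (u' i r)) \<longlonglongrightarrow> 0" if r: "r < 2" for r
      proof -
        have "lp_dist p ((?T i ^^ nk k) (x k r)) (u' i r) = lp_dist p ((?T i ^^ nk k) (v' r) + (\<Sum>j<N. b j k r)) (\<lambda>_. 0)" for k
          using lp_dist_0[of p "(?T i ^^ nk k) (x k r)" "u' i r"] comp[OF r] by simp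
        moreover have "(\<lambda>k. lp_dist p ((?T i ^^ nk k) (v' r) + (\<Sum>j<N. b j k r)) (\<lambda>_. 0)) \<longlonglongrightarrow> 0"
        proof (rule lp_tendsto_add[OF p1])
          show "(?T i ^^ nk k) (v' r) \<in> lp_space p" for k using lp_pshift_pow[OF p1 ps[OF i]] v'Y0[OF r] Y0lp by blast
          have blp: "b j k r \<in> lp_space p" if j: "j < N" for j k
            unfolding b_def using lp_pshift_pow[OF p1 ps[OF i]] Sin u'Ys[OF j r] Yslp[OF j] j lp_zero[OF p1]
            by (intro lp_diff[OF p1]) (auto simp: zero_fun_def)
          show "(\<Sum>j<N. b j k r) \<in> lp_space p" for k using blp by (intro lp_sum[OF p1]) auto
          show "(\<lambda>k. lp_dist p ((?T i ^^ nk k) (v' r)) (\<lambda>_. 0)) \<longlonglongrightarrow> 0" using c1 i v'Y0[OF r] by blast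
          show "(\<lambda>k. lp_dist p (\<Sum>j<N. b j k r) (\<lambda>_. 0)) \<longlonglongrightarrow> 0"
          proof (rule lp_tendsto_sum[OF p1])
            fix j assume j: "j \<in> {..<N}"
            show "b j k r \<in> lp_space p" for k using blp j by auto
            have "(\<lambda>k. lp_dist p ((?T i ^^ nk k) (Sjk j k (u' j r))) (if i = j then u' j r else (\<lambda>_. 0))) \<longlonglongrightarrow> 0"
              using c3 i j u'Ys[of j r] r by auto
            thus "(\<lambda>k. lp_dist p (b j k r) (\<lambda>_. 0)) \<longlonglongrightarrow> 0" unfolding b_def dist_rewrite .
          qed simp
        qed
        ultimately show ?thesis by simp
      qed
      have "?d ((psum_op 2 (\<lambda>_. 0) (?T i) ^^ nk k) (x k)) (u' i) = (\<Sum>r<2. lp_dist p ((?T i ^^ nk k) (x k r)) (u' i r))" for k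
        using psum_pow[OF xC[of k], of "nk k" "?T i"] by (simp add: psum_dist_def)
      moreover have "(\<lambda>k. \<Sum>r<2. lp_dist p ((?T i ^^ nk k) (x k r)) (u' i r)) \<longlonglongrightarrow> 0"
        by (rule tendsto_null_sum) (use cr in auto)
      ultimately show ?thesis by simp
    qed
    have ev1: "\<forall>\<^sub>F k in sequentially. ?d v' (x k) < eV / 8" using A v by (intro order_tendstoD) auto
    have "\<forall>i\<in>{..<N}. \<forall>\<^sub>F k in sequentially. ?d ((psum_op 2 (\<lambda>_. 0) (?T i) ^^ nk k) (x k)) (u' i) < eU i / 8"
    proof
      fix i assume "i \<in> {..<N}"
      thus "\<forall>\<^sub>F k in sequentially. ?d ((psum_op 2 (\<lambda>_. 0) (?T i) ^^ nk k) (x k)) (u' i) < eU i / 8"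
        using B u by (intro order_tendstoD) auto
    qed
    hence ev2: "\<forall>\<^sub>F k in sequentially. \<forall>i\<in>{..<N}. ?d ((psum_op 2 (\<lambda>_. 0) (?T i) ^^ nk k) (x k)) (u' i) < eU i / 8"
      by (rule eventually_ball_finite[rotated]) simp
    obtain K where K: "\<And>k. K \<le> k \<Longrightarrow> ?d v' (x k) < eV / 8 \<and> (\<forall>i\<in>{..<N}. ?d ((psum_op 2 (\<lambda>_. 0) (?T i) ^^ nk k) (x k)) (u' i) < eU i / 8)"
      using eventually_conj[OF ev1 ev2] unfolding eventually_sequentially by blast
    define k where "k = max K 1"
    have Kk: "?d v' (x k) < eV / 8" "\<And>i. i < N \<Longrightarrow> ?d ((psum_op 2 (\<lambda>_. 0) (?T i) ^^ nk k) (x k)) (u' i) < eU i / 8"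
      using K[of k] by (auto simp: k_def)
    show "\<exists>n\<ge>1. \<exists>y\<in>V. \<forall>i<N. (psum_op 2 (\<lambda>_. 0) (?T i) ^^ n) y \<in> U i"
    proof (intro exI[of _ "nk k"] conjI bexI[of _ "x k"] allI impI)
      show "1 \<le> nk k" using seq_suble[OF sm, of k] by (simp add: k_def)
      have "?d v (x k) \<le> 4 * (?d v v' + ?d v' (x k))" by (rule psum_quasi[OF p1 vC v'C xC])
      also have "\<dots> < eV" using v' Kk by simp
      finally show "x k \<in> V" using v xC by blast
      fix i assume i: "i < N"
      have TC: "(psum_op 2 (\<lambda>_. 0) (?T i) ^^ nk k) (x k) \<in> ?C" by (rule psum_pow_car[OF xC i])
      have "?d (u i) ((psum_op 2 (\<lambda>_. 0) (?T i) ^^ nk k) (x k)) \<le> 4 * (?d (u i) (u' i) + ?d (u' i) ((psum_op 2 (\<lambda>_. 0) (?T i) ^^ nk k) (x k)))"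
        by (rule psum_quasi[OF p1 uC[OF i] u'C[OF i] TC])
      also have "\<dots> < eU i" using u'[OF i] Kk(2)[OF i] psum_dist_sym[of 2 p "u' i"] by simp
      finally show "(psum_op 2 (\<lambda>_. 0) (?T i) ^^ nk k) (x k) \<in> U i" using u[OF i] TC by blast
    qed
  qed
qed

end

context psctx
begin

lemma bc_wm: assumes BC: "disjoint_bc_criterion (psum_carrier 2 (lp_space p) (\<lambda>_. 0)) (psum_dist 2 (lp_dist p)) (\<lambda>_. \<lambda>_. 0) N
           (\<lambda>i. psum_op 2 (\<lambda>_. 0) (pshift (fs i) (ws i)))"
  shows "d_weakly_mixing (lp_space p) (lp_dist p) (\<lambda>_. 0) N (\<lambda>i. pshift (fs i) (ws i))"
proof -
  let ?C = "psum_carrier 2 (lp_space p) (\<lambda>_. 0 :: 'a)"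
  let ?d = "psum_dist 2 (lp_dist p)"
  let ?T = "\<lambda>i. pshift (fs i) (ws i)"
  let ?P = "\<lambda>i. psum_op 2 (\<lambda>_. 0) (?T i)"
  obtain nk Y0 Sk where sm: "strict_mono nk" and dY0: "sp_dense ?C ?d Y0"
    and Skin: "\<forall>k y. (\<forall>i<N. y i \<in> Y0) \<longrightarrow> Sk k y \<in> ?C"
    and c1: "\<forall>i<N. \<forall>y\<in>Y0. (\<lambda>k. ?d ((?P i ^^ nk k) y) (\<lambda>_. \<lambda>_. 0)) \<longlonglongrightarrow> 0"
    and mn: "\<forall>\<epsilon>>0. \<forall>K. \<forall>y. (\<forall>i<N. y i \<in> Y0) \<longrightarrow>
            (\<exists>k\<ge>K. ?d (Sk k y) (\<lambda>_. \<lambda>_. 0) < \<epsilon> \<and> (\<forall>i<N. ?d ((?P i ^^ nk k) (Sk k y)) (y i) < \<epsilon>))"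
    using BC unfolding disjoint_bc_criterion_def by blast
  have Y0C: "Y0 \<subseteq> ?C" using dY0 by (simp add: sp_dense_def)
  show ?thesis unfolding d_weakly_mixing_def d_top_transitive_def
  proof (intro allI impI)
    fix V U assume VU: "sp_open ?C ?d V \<and> V \<noteq> {} \<and> (\<forall>i<N. sp_open ?C ?d (U i) \<and> U i \<noteq> {})"
    obtain v eV where v: "v \<in> V" "eV > 0" "\<And>y. y \<in> ?C \<Longrightarrow> ?d v y < eV \<Longrightarrow> y \<in> V"
      using open_pick[of ?C ?d V] VU by blast
    have "\<forall>i. \<exists>u e. i < N \<longrightarrow> u \<in> U i \<and> e > 0 \<and> (\<forall>y\<in>?C. ?d u y < e \<longrightarrow> y \<in> U i)"
      using open_pick VU by blast
    then obtain u eU where u: "\<And>i. i < N \<Longrightarrow> u i \<in> U i \<and> eU i > 0 \<and> (\<forall>y\<in>?C. ?d (u i) y < eU i \<longrightarrow> y \<in> U i)"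
      by metis
    have vC: "v \<in> ?C" using VU v unfolding sp_open_def by blast
    have uC: "i < N \<Longrightarrow> u i \<in> ?C" for i using VU u unfolding sp_open_def by blast
    obtain v' where v': "v' \<in> Y0" "?d v v' < eV / 8"
      using dY0 vC v unfolding sp_dense_def by (meson divide_pos_pos zero_less_numeral)
    have "\<forall>i. \<exists>w. i < N \<longrightarrow> w \<in> Y0 \<and> ?d (u i) w < eU i / 8"
    proof
      fix i show "\<exists>w. i < N \<longrightarrow> w \<in> Y0 \<and> ?d (u i) w < eU i / 8"
      proof (cases "i < N")
        case True
        have "eU i / 8 > 0" using u[OF True] by simp
        thus ?thesis using dY0 uC[OF True] unfolding sp_dense_def by blast
      qed simp
    qed
    then obtain u' where u': "\<And>i. i < N \<Longrightarrow> u' i \<in> Y0 \<and> ?d (u i) (u' i) < eU i / 8"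
      by metis
    have v'C: "v' \<in> ?C" using v' Y0C by blast
    have u'C: "i < N \<Longrightarrow> u' i \<in> ?C" for i using u' Y0C by blast
    define \<epsilon>0 where "\<epsilon>0 = Min (insert (eV / 8) ((\<lambda>i. eU i / 64) ` {..<N}))"
    have e0: "\<epsilon>0 > 0" unfolding \<epsilon>0_def using v u by (subst Min_gr_iff) auto
    have e0V: "\<epsilon>0 \<le> eV / 8" unfolding \<epsilon>0_def by (rule Min_le) auto
    have e0U: "i < N \<Longrightarrow> \<epsilon>0 \<le> eU i / 64" for i unfolding \<epsilon>0_def by (rule Min_le) auto
    have "\<forall>i\<in>{..<N}. \<forall>\<^sub>F k in sequentially. ?d ((?P i ^^ nk k) v') (\<lambda>_. \<lambda>_. 0) < \<epsilon>0"
    proof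
      fix i assume "i \<in> {..<N}"
      thus "\<forall>\<^sub>F k in sequentially. ?d ((?P i ^^ nk k) v') (\<lambda>_. \<lambda>_. 0) < \<epsilon>0"
        using c1 v' e0 by (intro order_tendstoD) auto
    qed
    hence "\<forall>\<^sub>F k in sequentially. \<forall>i\<in>{..<N}. ?d ((?P i ^^ nk k) v') (\<lambda>_. \<lambda>_. 0) < \<epsilon>0"
      by (rule eventually_ball_finite[rotated]) simp
    then obtain K0 where K0: "\<And>k. K0 \<le> k \<Longrightarrow> \<forall>i\<in>{..<N}. ?d ((?P i ^^ nk k) v') (\<lambda>_. \<lambda>_. 0) < \<epsilon>0"
      unfolding eventually_sequentially by blast
    have "\<forall>i<N. u' i \<in> Y0" using u' by blast
    then obtain k where k: "k \<ge> max K0 1" and s0: "?d (Sk k u') (\<lambda>_. \<lambda>_. 0) < \<epsilon>0"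
      and s1: "\<And>i. i < N \<Longrightarrow> ?d ((?P i ^^ nk k) (Sk k u')) (u' i) < \<epsilon>0"
      using mn e0 by blast
    define s where "s = Sk k u'"
    have sC: "s \<in> ?C" unfolding s_def using Skin u' by blast
    define x where "x = (\<lambda>r. if r < 2 then v' r + s r else (\<lambda>_. 0))"
    have xC: "x \<in> ?C" using sC v'C unfolding x_def psum_carrier_def by (auto intro: lp_add[OF p1])
    show "\<exists>n\<ge>1. \<exists>y\<in>V. \<forall>i<N. (?P i ^^ n) y \<in> U i"
    proof (intro exI[of _ "nk k"] conjI bexI[of _ x] allI impI)
      show "1 \<le> nk k" using seq_suble[OF sm, of k] k by simp
      have "?d v' x = ?d s (\<lambda>_. \<lambda>_. 0)"
        unfolding psum_dist_def x_def by (intro sum.cong) (auto simp: lp_dist_add_left)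
      hence "?d v' x < \<epsilon>0" using s0 s_def by simp
      have "?d v x \<le> 4 * (?d v v' + ?d v' x)" by (rule psum_quasi[OF p1 vC v'C xC])
      also have "\<dots> < eV" using v' \<open>?d v' x < \<epsilon>0\<close> e0V by simp
      finally show "x \<in> V" using v xC by blast
      fix i assume i: "i < N"
      have TxC: "(?P i ^^ nk k) x \<in> ?C" by (rule psum_pow_car[OF xC i])
      have TsC: "(?P i ^^ nk k) s \<in> ?C" by (rule psum_pow_car[OF sC i])
      have "?d ((?P i ^^ nk k) s) ((?P i ^^ nk k) x) = ?d ((?P i ^^ nk k) v') (\<lambda>_. \<lambda>_. 0)"
        unfolding psum_pow[OF xC] psum_pow[OF sC] psum_pow[OF v'C] psum_dist_def
        by (intro sum.cong) (auto simp: x_def pshift_pow_add add.commute[of "(?T i ^^ nk k) (v' _)"] lp_dist_add_left)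
      also have "\<dots> < \<epsilon>0" using K0[of k] k i by auto
      finally have d1: "?d ((?P i ^^ nk k) s) ((?P i ^^ nk k) x) < \<epsilon>0" .
      have "?d (u' i) ((?P i ^^ nk k) x) \<le> 4 * (?d (u' i) ((?P i ^^ nk k) s) + ?d ((?P i ^^ nk k) s) ((?P i ^^ nk k) x))"
        by (rule psum_quasi[OF p1 u'C[OF i] TsC TxC])
      also have "\<dots> < 4 * (\<epsilon>0 + \<epsilon>0)" using s1[OF i] d1 psum_dist_sym[of 2 p "u' i"] s_def by simp
      finally have d2: "?d (u' i) ((?P i ^^ nk k) x) < 8 * \<epsilon>0" by simp
      have "?d (u i) ((?P i ^^ nk k) x) \<le> 4 * (?d (u i) (u' i) + ?d (u' i) ((?P i ^^ nk k) x))"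
        by (rule psum_quasi[OF p1 uC[OF i] u'C[OF i] TxC])
      also have "\<dots> < eU i" using u'[OF i] d2 e0U[OF i] by simp
      finally show "(?P i ^^ nk k) x \<in> U i" using u[OF i] TxC by blast
    qed
  qed
qed

end

lemma big_from: fixes W a :: "'a::real_normed_field"
  assumes "norm (1 - W * a) < \<delta>" "norm a < \<delta>"
  shows "1 - \<delta> < norm W * \<delta>"
proof -
  have "norm (1::'a) \<le> norm (1 - W * a) + norm (W * a)" using norm_triangle_ineq[of "1 - W * a" "W * a"] by simp
  hence "1 - \<delta> < norm (W * a)" using assms(1) by simp
  also have "norm (W * a) = norm W * norm a" by (simp add: norm_mult)
  also have "\<dots> \<le> norm W * \<delta>" using assms(2) by (intro mult_left_mono) auto
  finally show ?thesis .
qed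

lemma ratio_from: fixes A C a :: "'a::real_normed_field"
  assumes "norm (1 - A * a) < \<delta>" "norm (0 - C * a) < \<delta>" "\<delta> \<le> 1/2"
  shows "norm (C / A) < 2 * \<delta>"
proof -
  have "norm (1::'a) \<le> norm (1 - A * a) + norm (A * a)" using norm_triangle_ineq[of "1 - A * a" "A * a"] by simp
  hence Aa: "1/2 < norm (A * a)" using assms by simp
  hence "A \<noteq> 0" by auto
  hence "norm (C / A) * norm (A * a) = norm (C * a)" by (simp add: norm_mult norm_divide)
  also have "\<dots> < \<delta>" using assms(2) by simp
  finally have "norm (C / A) * norm (A * a) < \<delta>" .
  moreover have "norm (C / A) * (1/2) \<le> norm (C / A) * norm (A * a)" using Aa by (intro mult_left_mono) auto
  ultimately show ?thesis by simp
qed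

lemma disj_alg: fixes A C a b ci cl :: "'a::real_normed_field"
  assumes 1: "norm (1 - A * a) < \<delta>" and 2: "norm (1 - C * a) < \<delta>" and 3: "norm (cl - A * b) < \<delta>"
    and 4: "norm (ci - C * b) < \<delta>" and d1: "\<delta> \<le> 1" and Ki: "norm ci \<le> K" and Kl: "norm cl \<le> K"
  shows "norm (ci - cl) < 2 * \<delta> * (K + 2)"
proof -
  define P where "P = (A * a) * (C * b)"
  have P2: "P = (C * a) * (A * b)" unfolding P_def by (simp add: ac_simps)
  have gen: "norm (X * Y - c) < \<delta> * (K + 2)" if x: "norm (1 - X) < \<delta>" and y: "norm (c - Y) < \<delta>" and c: "norm c \<le> K" for X Y c :: 'a
  proof -
    have "X * Y - c = (X - 1) * Y + (Y - c)" by (simp add: algebra_simps)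
    hence "norm (X * Y - c) \<le> norm (X - 1) * norm Y + norm (Y - c)"
      by (metis norm_mult norm_triangle_ineq)
    moreover have "norm Y \<le> K + 1"
    proof -
      have "norm Y \<le> norm c + norm (c - Y)" using norm_triangle_ineq[of c "Y - c"] by (simp add: norm_minus_commute)
      thus ?thesis using c y d1 by simp
    qed
    moreover have "norm (X - 1) \<le> \<delta>" using x by (simp add: norm_minus_commute)
    moreover have "norm (Y - c) < \<delta>" using y by (simp add: norm_minus_commute)
    ultimately have "norm (X * Y - c) < \<delta> * (K + 1) + \<delta>"
      by (smt (verit, best) mult_mono norm_ge_zero)
    thus ?thesis by (simp add: algebra_simps)
  qed
  have "norm (P - ci) < \<delta> * (K + 2)" unfolding P_def using gen[OF 1 4 Ki] .
  moreover have "norm (P - cl) < \<delta> * (K + 2)" unfolding P2 using gen[OF 2 3 Kl] .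
  moreover have "norm (ci - cl) \<le> norm (P - ci) + norm (P - cl)"
    using norm_triangle_ineq[of "ci - P" "P - cl"] by (simp add: norm_minus_commute)
  ultimately show ?thesis by simp
qed

lemma of_nat_dist: "i \<noteq> l \<Longrightarrow> 1 \<le> norm (of_nat i - of_nat l :: 'a::real_normed_field)"
proof -
  assume "i \<noteq> l"
  have "(of_nat i - of_nat l :: 'a) = of_int (int i - int l)" by simp
  hence "norm (of_nat i - of_nat l :: 'a) = \<bar>real_of_int (int i - int l)\<bar>" by (simp only: norm_of_int)
  thus ?thesis using \<open>i \<noteq> l\<close> by linarith
qed


context psctx
begin

lemma wm_G: assumes N1: "1 \<le> N"
  and WM: "d_weakly_mixing (lp_space p) (lp_dist p) (\<lambda>_. 0) N (\<lambda>i. pshift (fs i) (ws i))"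
  shows "\<forall>r n0. \<exists>n\<ge>n0. good N fs ws n r"
proof (intro allI)
  fix r n0
  show "\<exists>n\<ge>n0. good N fs ws n r"
  proof (cases "r = 0")
    case True thus ?thesis by (intro exI[of _ n0]) (simp add: good_def)
  next
    case False
    let ?C = "psum_carrier 2 (lp_space p) (\<lambda>_. 0 :: 'a)"
    let ?d = "psum_dist 2 (lp_dist p)"
    let ?T = "\<lambda>i. pshift (fs i) (ws i)"
    let ?P = "\<lambda>i. psum_op 2 (\<lambda>_. 0) (?T i)"
    have "\<forall>i. \<exists>B. i < N \<longrightarrow> (\<forall>m. norm (ws i (fs i m)) \<le> B)"
      using ps unfolding pseudo_shift_data_def by blast
    then obtain Bf where Bf: "\<And>i m. i < N \<Longrightarrow> norm (ws i (fs i m)) \<le> Bf i" by metis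
    define B where "B = Max (insert 1 (Bf ` {..<N}))"
    have B1: "1 \<le> B" unfolding B_def by (rule Max_ge) auto
    have Bp: "0 \<le> B ^ n0" using B1 by simp
    have BB: "norm (ws i (fs i m)) \<le> B" if i: "i < N" for i m
    proof -
      have "Bf i \<le> B" unfolding B_def by (rule Max_ge) (use i in auto)
      thus ?thesis using Bf[OF i, of m] by linarith
    qed
    define X where "X = real r + B ^ n0 + real N + 2"
    define \<delta> where "\<delta> = 1 / (2 * (X + 1))"
    have X0: "X \<ge> 2" unfolding X_def using B1 by simp
    have d0: "\<delta> > 0" and dh: "\<delta> \<le> 1/2" unfolding \<delta>_def using X0 by (auto simp: field_simps)
    have dinv: "(1 - \<delta>) / \<delta> = 2 * X + 1" unfolding \<delta>_def using X0 by (simp add: field_simps)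
    define e1 where "e1 = (\<lambda>m. if m < r then 1 else 0 :: 'a)"
    define c where "c i = (\<lambda>m. if m < r then of_nat i else 0 :: 'a)" for i
    have e1lp: "e1 \<in> lp_space p" unfolding e1_def by (rule c00_lp[OF p1]) (auto simp: c00_def intro!: exI[of _ r])
    have clp: "c i \<in> lp_space p" for i unfolding c_def by (rule c00_lp[OF p1]) (auto simp: c00_def intro!: exI[of _ r])
    define z0 where "z0 = (\<lambda>_::nat. \<lambda>_::nat. 0 :: 'a)"
    define u where "u i = (\<lambda>\<rho>::nat. if \<rho> = 0 then e1 else if \<rho> = 1 then c i else (\<lambda>_. 0))" for i
    have z0C: "z0 \<in> ?C" unfolding z0_def psum_carrier_def using lp_zero[OF p1] by auto
    have uC: "u i \<in> ?C" for i unfolding u_def psum_carrier_def using e1lp clp by auto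
    define V where "V = ib ?C ?d z0 \<delta>"
    define U where "U i = ib ?C ?d (u i) \<delta>" for i
    have "\<exists>n\<ge>1. \<exists>x\<in>V. \<forall>i<N. (?P i ^^ n) x \<in> U i"
      using WM unfolding d_weakly_mixing_def d_top_transitive_def
    proof (elim allE impE)
      show "sp_open ?C ?d V \<and> V \<noteq> {} \<and> (\<forall>i<N. sp_open ?C ?d (U i) \<and> U i \<noteq> {})"
        unfolding V_def U_def using psum_open[OF p1] ib_center[OF z0C d0] ib_center[OF uC d0] by blast
    qed
    then obtain n x where n1: "n \<ge> 1" and xV: "x \<in> V" and xU: "\<And>i. i < N \<Longrightarrow> (?P i ^^ n) x \<in> U i" by blast
    have xC: "x \<in> ?C" using xV unfolding V_def ib_def by blast
    have xlp: "\<rho> < 2 \<Longrightarrow> x \<rho> \<in> lp_space p" for \<rho> using xC by (simp add: psum_carrier_def)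
    have dx: "?d z0 x < \<delta>" using ib_mem[of x ?C ?d z0 \<delta>] xV unfolding V_def by (simp add: psum_dist_self[OF p1])
    have X0pt: "norm (x 0 t) < \<delta>" for t
    proof -
      have "norm ((\<lambda>_. 0::'a) t - x 0 t) \<le> lp_dist p (\<lambda>_. 0) (x 0)" by (rule lp_dist_pt[OF p1 lp_zero[OF p1] xlp]) simp
      also have "\<dots> \<le> ?d z0 x" using psum_comp[OF p1, of 0 2 z0 x] by (simp add: z0_def)
      finally show ?thesis using dx by simp
    qed
    have PT: "norm (u i \<rho> m - Wprod (fs i) (ws i) m n * x \<rho> ((fs i ^^ n) m)) < \<delta>" if i: "i < N" and \<rho>: "\<rho> < 2" for i \<rho> m
    proof -
      have Tlp: "(?T i ^^ n) (x \<rho>) \<in> lp_space p" using lp_pshift_pow[OF p1 ps[OF i] xlp[OF \<rho>]] .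
      have ulp: "u i \<rho> \<in> lp_space p" using uC \<rho> by (simp add: psum_carrier_def)
      have "?d (u i) ((?P i ^^ n) x) < \<delta>"
        using ib_mem[of "(?P i ^^ n) x" ?C ?d "u i" \<delta>] xU[OF i] unfolding U_def by (simp add: psum_dist_self[OF p1])
      moreover have "lp_dist p (u i \<rho>) ((?T i ^^ n) (x \<rho>)) \<le> ?d (u i) ((?P i ^^ n) x)"
        using psum_comp[OF p1 \<rho>, of "u i" "(?P i ^^ n) x"] psum_pow[OF xC, of n "?T i"] \<rho> by simp
      moreover have "norm (u i \<rho> m - (?T i ^^ n) (x \<rho>) m) \<le> lp_dist p (u i \<rho>) ((?T i ^^ n) (x \<rho>))"
        by (rule lp_dist_pt[OF p1 ulp Tlp])
      ultimately show ?thesis by (simp add: pshift_pow)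
    qed
    have P1: "norm ((if m < r then 1 else 0) - Wprod (fs i) (ws i) m n * x 0 ((fs i ^^ n) m)) < \<delta>" if "i < N" for i m
      using PT[OF that, of 0 m] by (simp add: u_def e1_def)
    have P2: "norm ((if m < r then of_nat i else 0) - Wprod (fs i) (ws i) m n * x 1 ((fs i ^^ n) m)) < \<delta>" if "i < N" for i m
      using PT[OF that, of 1 m] by (simp add: u_def c_def)
    have big: "2 * X + 1 < norm (Wprod (fs i) (ws i) m n)" if i: "i < N" and m: "m < r" for i m
    proof -
      have "1 - \<delta> < norm (Wprod (fs i) (ws i) m n) * \<delta>"
        using big_from[OF _ X0pt] P1[OF i, of m] m by simp
      hence "(1 - \<delta>) / \<delta> < norm (Wprod (fs i) (ws i) m n)" using d0 by (simp add: field_simps)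
      thus ?thesis using dinv by simp
    qed
    have nn0: "n0 \<le> n"
    proof (rule ccontr)
      assume "\<not> n0 \<le> n"
      hence "B ^ n \<le> B ^ n0" using B1 by (intro power_increasing) auto
      moreover have "norm (Wprod (fs 0) (ws 0) 0 n) \<le> B ^ n" using BB[of 0] N1 by (intro Wprod_bound) auto
      moreover have "2 * X + 1 < norm (Wprod (fs 0) (ws 0) 0 n)" using big[of 0 0] N1 False by auto
      moreover have "0 \<le> B ^ n0" using B1 by simp
      ultimately show False unfolding X_def by simp
    qed
    have "good N fs ws n r" unfolding good_def
    proof (intro conjI allI impI)
      fix m i assume "m < r" "i < N"
      moreover have "0 \<le> B ^ n0" using B1 by simp
      ultimately show "real r < norm (Wprod (fs i) (ws i) m n)" using big[of i m] unfolding X_def by simp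
    next
      fix i l assume il: "i < N" "l < N" "i \<noteq> l"
      show "(fs l ^^ n) ` {..<r} \<inter> (fs i ^^ n) ` {..<r} = {}"
      proof (rule ccontr)
        assume "(fs l ^^ n) ` {..<r} \<inter> (fs i ^^ n) ` {..<r} \<noteq> {}"
        then obtain m1 m2 where m: "m1 < r" "m2 < r" "(fs l ^^ n) m1 = (fs i ^^ n) m2" by auto
        define t where "t = (fs l ^^ n) m1"
        have "norm (of_nat i - of_nat l :: 'a) < 2 * \<delta> * (real N + 2)"
        proof (rule disj_alg)
          show "norm (1 - Wprod (fs l) (ws l) m1 n * x 0 t) < \<delta>" using P1[OF il(2), of m1] m by (simp add: t_def)
          show "norm (1 - Wprod (fs i) (ws i) m2 n * x 0 t) < \<delta>" using P1[OF il(1), of m2] m by (simp add: t_def)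
          show "norm (of_nat l - Wprod (fs l) (ws l) m1 n * x 1 t) < \<delta>" using P2[OF il(2), of m1] m by (simp add: t_def)
          show "norm (of_nat i - Wprod (fs i) (ws i) m2 n * x 1 t) < \<delta>" using P2[OF il(1), of m2] m by (simp add: t_def)
          show "\<delta> \<le> 1" using dh by simp
          show "norm (of_nat i :: 'a) \<le> real N" using il by (simp add: norm_of_nat)
          show "norm (of_nat l :: 'a) \<le> real N" using il by (simp add: norm_of_nat)
        qed
        moreover have "2 * \<delta> * (real N + 2) \<le> 1"
        proof -
          have "2 * \<delta> * (real N + 2) = (real N + 2) / (X + 1)" unfolding \<delta>_def using X0 by (simp add: field_simps)
          moreover have "real N + 2 \<le> X + 1" unfolding X_def using B1 by simp
          ultimately show ?thesis using X0 by (simp add: divide_le_eq_1_pos)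
        qed
        ultimately show False using of_nat_dist[OF il(3), where 'a='a] by simp
      qed
      fix m1 m' assume m: "m1 < r" "r \<le> m'" "(fs l ^^ n) m1 = (fs i ^^ n) m'"
      define t where "t = (fs l ^^ n) m1"
      have "norm (Wprod (fs i) (ws i) m' n / Wprod (fs l) (ws l) m1 n) < 2 * \<delta>"
      proof (rule ratio_from[OF _ _ dh])
        show "norm (1 - Wprod (fs l) (ws l) m1 n * x 0 t) < \<delta>" using P1[OF il(2), of m1] m by (simp add: t_def)
        show "norm (0 - Wprod (fs i) (ws i) m' n * x 0 t) < \<delta>" using P1[OF il(1), of m'] m by (simp add: t_def)
      qed
      moreover have "2 * \<delta> * r < 1"
      proof -
        have "2 * \<delta> * r = r / (X + 1)" unfolding \<delta>_def using X0 by (simp add: field_simps)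
        moreover have "real r < X + 1" unfolding X_def using Bp by simp
        ultimately show ?thesis using X0 by (simp add: divide_less_eq_1_pos)
      qed
      ultimately have "norm (Wprod (fs i) (ws i) m' n / Wprod (fs l) (ws l) m1 n) * r < 2 * \<delta> * r"
        using False by (intro mult_strict_right_mono) auto
      thus "norm (Wprod (fs i) (ws i) m' n / Wprod (fs l) (ws l) m1 n) * r < 1"
        using \<open>2 * \<delta> * r < 1\<close> by linarith
    qed
    thus ?thesis using nn0 by blast
  qed
qed

end

theorem theorem2p8:
  fixes p :: real and N :: nat
    and fs :: "nat \<Rightarrow> nat \<Rightarrow> nat"
    and ws :: "nat \<Rightarrow> nat \<Rightarrow> 'a::{real_normed_field, banach}"
  assumes p: "1 \<le> p" and N: "2 \<le> N"
    and ps: "\<And>i. i < N \<Longrightarrow> pseudo_shift_data (fs i) (ws i)"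
  defines "T \<equiv> (\<lambda>i. pshift (fs i) (ws i))"
  shows
    "(d_weakly_mixing (lp_space p) (lp_dist p) (\<lambda>_. 0) N T
        \<longleftrightarrow> disjoint_hc_criterion (lp_space p) (lp_dist p) (\<lambda>_. 0) N T)
   \<and> (d_weakly_mixing (lp_space p) (lp_dist p) (\<lambda>_. 0) N T
        \<longleftrightarrow> (\<forall>R\<ge>1. disjoint_bc_criterion (psum_carrier R (lp_space p) (\<lambda>_. 0))
                 (psum_dist R (lp_dist p)) (\<lambda>_. \<lambda>_. 0) N (\<lambda>i. psum_op R (\<lambda>_. 0) (T i))))
   \<and> (d_weakly_mixing (lp_space p) (lp_dist p) (\<lambda>_. 0) N T
        \<longleftrightarrow> (\<exists>nk :: nat \<Rightarrow> nat. strict_mono nk \<and> (\<forall>k. 0 < nk k) \<and>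
              (\<forall>m. \<forall>i<N. filterlim (\<lambda>k. norm (Wprod (fs i) (ws i) m (nk k))) at_top sequentially) \<and>
              (\<forall>\<epsilon>>0. \<forall>K M. \<exists>k\<ge>K. \<forall>i<N. \<forall>l<N. i \<noteq> l \<longrightarrow>
                  ((fs l ^^ nk k) ` {..<M} \<inter> (fs i ^^ nk k) ` {..<M} = {} \<and>
                   (\<forall>j \<in> (fs l ^^ nk k) ` {..<M} \<inter> (fs i ^^ nk k) ` (UNIV - {..<M}).
                      norm (Wprod (fs i) (ws i) (inv (fs i ^^ nk k) j) (nk k)
                            / Wprod (fs l) (ws l) (inv (fs l ^^ nk k) j) (nk k)) < \<epsilon>)))))"
proof -
  interpret psctx N fs ws p
    by unfold_locales (auto intro: ps p)
  have N1: "1 \<le> N" using N by simp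
  let ?WM = "d_weakly_mixing (lp_space p) (lp_dist p) (\<lambda>_. 0) N (\<lambda>i. pshift (fs i) (ws i))"
  let ?G = "\<forall>r n0. \<exists>n\<ge>n0. good N fs ws n r"
  have wmG: "?WM \<Longrightarrow> ?G" using wm_G[OF N1] by blast
  have Gwm: "?G \<Longrightarrow> ?WM" using G_dhc dhc_wm by blast
  have 1: "?WM \<longleftrightarrow> disjoint_hc_criterion (lp_space p) (lp_dist p) (\<lambda>_. 0) N (\<lambda>i. pshift (fs i) (ws i))"
    using wmG G_dhc dhc_wm by blast
  have 2: "?WM \<longleftrightarrow> (\<forall>R\<ge>1. disjoint_bc_criterion (psum_carrier R (lp_space p) (\<lambda>_. 0))
                 (psum_dist R (lp_dist p)) (\<lambda>_. \<lambda>_. 0) N (\<lambda>i. psum_op R (\<lambda>_. 0) (pshift (fs i) (ws i))))"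
  proof
    assume "?WM"
    thus "\<forall>R\<ge>1. disjoint_bc_criterion (psum_carrier R (lp_space p) (\<lambda>_. 0))
                 (psum_dist R (lp_dist p)) (\<lambda>_. \<lambda>_. 0) N (\<lambda>i. psum_op R (\<lambda>_. 0) (pshift (fs i) (ws i)))"
      using wmG G_bc by blast
  next
    assume "\<forall>R\<ge>1. disjoint_bc_criterion (psum_carrier R (lp_space p) (\<lambda>_. 0))
                 (psum_dist R (lp_dist p)) (\<lambda>_. \<lambda>_. 0) N (\<lambda>i. psum_op R (\<lambda>_. 0) (pshift (fs i) (ws i)))"
    hence "disjoint_bc_criterion (psum_carrier 2 (lp_space p) (\<lambda>_. 0))
                 (psum_dist 2 (lp_dist p)) (\<lambda>_. \<lambda>_. 0) N (\<lambda>i. psum_op 2 (\<lambda>_. 0) (pshift (fs i) (ws i)))"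
      by (metis one_le_numeral)
    thus "?WM" by (rule bc_wm)
  qed
  have 3: "?WM \<longleftrightarrow> cond_iv" using wmG G_iv iv_G Gwm by blast
  show ?thesis unfolding T_def using 1 2 3 unfolding cond_iv_def by blast
qed

end
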